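(* Let $T>0$ and $0<\beta<1$. Let $M^D_\beta$ be the Gaussian white noise on $\mathbb{R}\times\mathbb{R}_+$ with control measure $u^{-\beta-1}\mathbf{1}(0<x-u,\ x+u<T)\,dx\,du$ and define $W_\beta(t)=\int_{\mathbb{R}\times\mathbb{R}_+}\mathbf{1}(|t-x|\le u)\,M^D_\beta(dx,du)$, $t\in[0,T]$. Let $B=(B_t)_{t\in[0,T]}$ be standard Brownian motion independent of $W_\beta$, and define the Gaussian martingale \[ Y_\beta(t)=\sqrt{\frac{2^\beta}{\beta}}\int_0^t\sqrt{x^{-\beta}+(T-x)^{-\beta}}\,dB_x,\qquad t\in[0,T]. \] Then $W_\beta+Y_\beta$ is, up to a multiplicative constant, a fractional Brownian motion on $[0,T]$ with Hurst index $H=(1-\beta)/2$.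
   Context: Gaussian white noise with control measure $\nu$: centered Gaussian family $M(A)$ with $\mathrm{Cov}(M(A),M(B))=\nu(A\cap B)$ and its isometric stochastic integral. Fractional Brownian motion with Hurst index $H$ is the centered Gaussian process with covariance $\frac12(|s|^{2H}+|t|^{2H}-|t-s|^{2H})$. *)

theory Defs
  imports "HOL-Probability.Probability"
begin

definition gaussian_rv :: "'a measure \<Rightarrow> ('a \<Rightarrow> real) \<Rightarrow> bool" where
  "gaussian_rv P X \<longleftrightarrow> X \<in> borel_measurable P \<and>
     ((\<exists>\<mu> \<sigma>. \<sigma> > 0 \<and> distributed P lborel X (normal_density \<mu> \<sigma>)) \<or>
      (\<exists>c. AE \<omega> in P. X \<omega> = c))"

definition jointly_gaussian :: "'a measure \<Rightarrow> 'i set \<Rightarrow> ('i \<Rightarrow> 'a \<Rightarrow> real) \<Rightarrow> bool" where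
  "jointly_gaussian P I X \<longleftrightarrow>
     (\<forall>J a. J \<subseteq> I \<longrightarrow> finite J \<longrightarrow> gaussian_rv P (\<lambda>\<omega>. \<Sum>j\<in>J. a j * X j \<omega>))"

definition centered_gaussian_family ::
  "'a measure \<Rightarrow> 'i set \<Rightarrow> ('i \<Rightarrow> 'a \<Rightarrow> real) \<Rightarrow> ('i \<Rightarrow> 'i \<Rightarrow> real) \<Rightarrow> bool" where
  "centered_gaussian_family P I X K \<longleftrightarrow> jointly_gaussian P I X \<and>
     (\<forall>i\<in>I. integral\<^sup>L P (X i) = 0) \<and>
     (\<forall>i\<in>I. \<forall>j\<in>I. integral\<^sup>L P (\<lambda>\<omega>. X i \<omega> * X j \<omega>) = K i j)"

definition gaussian_white_noise :: "'a measure \<Rightarrow> 'b measure \<Rightarrow> ('b set \<Rightarrow> 'a \<Rightarrow> real) \<Rightarrow> bool" where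
  "gaussian_white_noise P \<nu> M \<longleftrightarrow>
     centered_gaussian_family P {A \<in> sets \<nu>. emeasure \<nu> A < \<infinity>} M
       (\<lambda>A B. measure \<nu> (A \<inter> B))"

definition brownian_motion_on :: "'a measure \<Rightarrow> real \<Rightarrow> (real \<Rightarrow> 'a \<Rightarrow> real) \<Rightarrow> bool" where
  "brownian_motion_on P T B \<longleftrightarrow>
     centered_gaussian_family P {0..T} B (\<lambda>s t. min s t) \<and>
     (AE \<omega> in P. continuous_on {0..T} (\<lambda>t. B t \<omega>))"

definition fbm_on :: "'a measure \<Rightarrow> real \<Rightarrow> real \<Rightarrow> (real \<Rightarrow> 'a \<Rightarrow> real) \<Rightarrow> bool" where
  "fbm_on P H T X \<longleftrightarrow>
     centered_gaussian_family P {0..T} X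
       (\<lambda>s t. (\<bar>s\<bar> powr (2*H) + \<bar>t\<bar> powr (2*H) - \<bar>t - s\<bar> powr (2*H)) / 2)"

definition step_fun :: "(real \<times> real \<times> real) list \<Rightarrow> real \<Rightarrow> real" where
  "step_fun l x = (\<Sum>(a, s, t)\<leftarrow>l. a * indicator {s<..t} x)"

definition step_int :: "(real \<Rightarrow> 'a \<Rightarrow> real) \<Rightarrow> (real \<times> real \<times> real) list \<Rightarrow> 'a \<Rightarrow> real" where
  "step_int B l \<omega> = (\<Sum>(a, s, t)\<leftarrow>l. a * (B t \<omega> - B s \<omega>))"

text \<open>X is (a version of) the Wiener integral \<integral>_0^T g dB: the L^2(P)-limit of the
elementary integrals of step functions converging to g in L^2[0,T] (isometric extension).\<close>
definition wiener_integral ::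
  "'a measure \<Rightarrow> real \<Rightarrow> (real \<Rightarrow> 'a \<Rightarrow> real) \<Rightarrow> (real \<Rightarrow> real) \<Rightarrow> ('a \<Rightarrow> real) \<Rightarrow> bool" where
  "wiener_integral P T B g X \<longleftrightarrow> X \<in> borel_measurable P \<and>
     (\<exists>l :: nat \<Rightarrow> (real \<times> real \<times> real) list.
        (\<forall>n. \<forall>(a, s, t)\<in>set (l n). 0 \<le> s \<and> s \<le> t \<and> t \<le> T) \<and>
        ((\<lambda>n. \<integral>\<^sup>+ x. ennreal ((step_fun (l n) x - g x)\<^sup>2) * indicator {0..T} x \<partial>lborel)
           \<longlonglongrightarrow> 0) \<and>
        ((\<lambda>n. \<integral>\<^sup>+ \<omega>. ennreal ((step_int B (l n) \<omega> - X \<omega>)\<^sup>2) \<partial>P) \<longlonglongrightarrow> 0))"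

definition control_measure :: "real \<Rightarrow> real \<Rightarrow> (real \<times> real) measure" where
  "control_measure \<beta> T = density lborel
     (\<lambda>(x, u). ennreal (if 0 < u \<and> 0 < x - u \<and> x + u < T then u powr (-\<beta> - 1) else 0))"

end

theory Submission
  imports Defs
begin

definition cf :: "'a measure \<Rightarrow> ('a \<Rightarrow> real) \<Rightarrow> real \<Rightarrow> complex" where
  "cf P X t = (CLINT \<omega>|P. iexp (t * X \<omega>))"

definition gex :: "real \<Rightarrow> real \<Rightarrow> real \<Rightarrow> complex" where
  "gex \<mu> v t = iexp (t * \<mu>) * complex_of_real (exp (- (v * t\<^sup>2) / 2))"

lemma cf_distr: "X \<in> borel_measurable P \<Longrightarrow> char (distr P borel X) t = cf P X t"
  unfolding char_def cf_def by (subst integral_distr) auto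

lemma char_normal:
  assumes "\<sigma> > 0"
  shows "char (density lborel (normal_density \<mu> \<sigma>)) t = gex \<mu> (\<sigma>\<^sup>2) t"
proof -
  let ?S = "std_normal_distribution"
  interpret S: prob_space ?S using real_dist_normal_dist real_distribution_def by blast
  have d: "distributed ?S lborel (\<lambda>x. x) std_normal_density"
    unfolding distributed_def by (simp add: distr_id2)
  have "distributed ?S lborel (\<lambda>x. \<mu> + \<sigma> * x) (normal_density (\<mu> + \<sigma> * 0) (\<bar>\<sigma>\<bar> * 1))"
    by (rule S.normal_density_affine[OF d]) (use assms in auto)
  then have e: "distr ?S lborel (\<lambda>x. \<mu> + \<sigma> * x) = density lborel (normal_density \<mu> \<sigma>)"
    using assms unfolding distributed_def by simp
  have "char (density lborel (normal_density \<mu> \<sigma>)) t = (CLINT z|?S. iexp (t * (\<mu> + \<sigma> * z)))"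
    unfolding char_def e[symmetric] by (subst integral_distr) auto
  also have "\<dots> = (CLINT z|?S. iexp (t * \<mu>) * iexp ((t * \<sigma>) * z))"
    by (rule Bochner_Integration.integral_cong) (auto simp: distrib_left exp_add[symmetric] algebra_simps)
  also have "\<dots> = iexp (t * \<mu>) * char ?S (t * \<sigma>)"
    unfolding char_def by simp
  also have "\<dots> = gex \<mu> (\<sigma>\<^sup>2) t"
    unfolding char_std_normal_distribution gex_def by (simp add: power_mult_distrib mult.commute)
  finally show ?thesis .
qed

lemma char_return: "char (return borel \<mu>) t = gex \<mu> 0 t"
  unfolding char_def gex_def by (subst integral_return) (auto simp: mult.commute)

lemma gaussian_cf:
  assumes P: "prob_space P" and G: "gaussian_rv P X"
  shows "integrable P X" "integrable P (\<lambda>\<omega>. (X \<omega>)\<^sup>2)"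
    "cf P X t = gex (integral\<^sup>L P X) (integral\<^sup>L P (\<lambda>\<omega>. (X \<omega>)\<^sup>2) - (integral\<^sup>L P X)\<^sup>2) t"
proof -
  interpret prob_space P by fact
  have Xm[measurable]: "X \<in> borel_measurable P" using G unfolding gaussian_rv_def by auto
  have "(integrable P X \<and> integrable P (\<lambda>\<omega>. (X \<omega>)\<^sup>2)) \<and>
    cf P X t = gex (integral\<^sup>L P X) (integral\<^sup>L P (\<lambda>\<omega>. (X \<omega>)\<^sup>2) - (integral\<^sup>L P X)\<^sup>2) t"
  proof (cases "\<exists>\<mu> \<sigma>. \<sigma> > 0 \<and> distributed P lborel X (normal_density \<mu> \<sigma>)")
    case True
    then obtain \<mu> \<sigma> where s: "\<sigma> > 0" and D: "distributed P lborel X (normal_density \<mu> \<sigma>)" by auto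
    have i1: "integrable P X"
      using distributed_integrable[OF D, of "\<lambda>x. x"] integrable_normal_moment_nz_1[OF s] by simp
    have "integrable lborel (\<lambda>x. normal_density \<mu> \<sigma> x * (x - \<mu>)^2)"
      by (rule integrable_normal_moment[OF s])
    then have "integrable P (\<lambda>\<omega>. (X \<omega> - \<mu>)^2)"
      using distributed_integrable[OF D, of "\<lambda>x. (x - \<mu>)^2"] by simp
    moreover have "(\<lambda>\<omega>. (X \<omega>)\<^sup>2) = (\<lambda>\<omega>. (X \<omega> - \<mu>)^2 + 2 * \<mu> * X \<omega> - \<mu>^2)"
      by (auto simp: power2_eq_square algebra_simps)
    ultimately have i2: "integrable P (\<lambda>\<omega>. (X \<omega>)\<^sup>2)" using i1 by simp
    have m: "expectation X = \<mu>" by (rule normal_distributed_expectation[OF s D])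
    have v: "variance X = \<sigma>\<^sup>2" by (rule normal_distributed_variance[OF s D])
    have vv: "integral\<^sup>L P (\<lambda>\<omega>. (X \<omega>)\<^sup>2) - (integral\<^sup>L P X)\<^sup>2 = \<sigma>\<^sup>2"
      using v variance_eq[OF i1 i2] by simp
    have "distr P borel X = distr P lborel X" by (rule distr_cong) auto
    also have "\<dots> = density lborel (normal_density \<mu> \<sigma>)" using D unfolding distributed_def by simp
    finally have "cf P X t = char (density lborel (normal_density \<mu> \<sigma>)) t"
      using cf_distr[OF Xm] by metis
    then show ?thesis using char_normal[OF s] i1 i2 m vv by simp
  next
    case False
    then obtain c where c: "AE \<omega> in P. X \<omega> = c" using G unfolding gaussian_rv_def by auto
    have i1: "integrable P X" by (rule integrable_cong_AE_imp[of _ "\<lambda>_. c"]) (use c in auto)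
    have i2: "integrable P (\<lambda>\<omega>. (X \<omega>)\<^sup>2)"
      by (rule integrable_cong_AE_imp[of _ "\<lambda>_. c^2"]) (use c in auto)
    have m: "integral\<^sup>L P X = c"
      by (subst integral_cong_AE[where g="\<lambda>_. c"]) (use c in \<open>auto simp: prob_space\<close>)
    have m2: "integral\<^sup>L P (\<lambda>\<omega>. (X \<omega>)\<^sup>2) = c^2"
      by (subst integral_cong_AE[where g="\<lambda>_. c^2"]) (use c in \<open>auto simp: prob_space\<close>)
    have "cf P X t = (CLINT \<omega>|P. iexp (t * c))"
      unfolding cf_def by (rule integral_cong_AE) (use c in auto)
    also have "\<dots> = gex c 0 t" by (simp add: prob_space gex_def mult.commute)
    finally show ?thesis using i1 i2 m m2 by simp
  qed
  then show "integrable P X" "integrable P (\<lambda>\<omega>. (X \<omega>)\<^sup>2)"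
    "cf P X t = gex (integral\<^sup>L P X) (integral\<^sup>L P (\<lambda>\<omega>. (X \<omega>)\<^sup>2) - (integral\<^sup>L P X)\<^sup>2) t" by auto
qed

lemma cf_gaussian:
  assumes P: "prob_space P" and Xm: "X \<in> borel_measurable P" and v: "v \<ge> 0"
    and C: "\<And>t. cf P X t = gex \<mu> v t"
  shows "gaussian_rv P X"
proof -
  interpret prob_space P by fact
  have rd: "real_distribution (distr P borel X)"
    by (simp add: Xm prob_space_distr real_distribution_def real_distribution_axioms_def)
  show ?thesis
  proof (cases "v = 0")
    case True
    have rr: "real_distribution (return borel \<mu>)"
      by (simp add: prob_space_return real_distribution_def real_distribution_axioms_def)
    have "char (distr P borel X) = char (return borel \<mu>)"
      using C True cf_distr[OF Xm] char_return by auto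
    then have e: "distr P borel X = return borel \<mu>" using Levy_uniqueness[OF rd rr] by simp
    have "AE x in distr P borel X. x = \<mu>" unfolding e by (simp add: AE_return)
    then have "AE \<omega> in P. X \<omega> = \<mu>" by (subst (asm) AE_distr_iff) (use Xm in auto)
    then show ?thesis unfolding gaussian_rv_def using Xm by auto
  next
    case False
    then have s: "sqrt v > 0" using v by simp
    have rn: "real_distribution (density lborel (normal_density \<mu> (sqrt v)))"
      using prob_space_normal_density[OF s] by (auto simp: real_distribution_def real_distribution_axioms_def)
    have "char (distr P borel X) = char (density lborel (normal_density \<mu> (sqrt v)))"
      using C cf_distr[OF Xm] char_normal[OF s] v by auto
    then have e: "distr P borel X = density lborel (normal_density \<mu> (sqrt v))"
      using Levy_uniqueness[OF rd rn] by simp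
    have "distr P lborel X = distr P borel X" by (rule distr_cong) auto
    then have "distributed P lborel X (normal_density \<mu> (sqrt v))"
      unfolding distributed_def using e Xm by auto
    then show ?thesis unfolding gaussian_rv_def using Xm s by blast
  qed
qed

lemma gaussian_add_indep:
  assumes P: "prob_space P" and GX: "gaussian_rv P X" and GY: "gaussian_rv P Y"
    and I: "prob_space.indep_var P borel X borel Y"
  shows "gaussian_rv P (\<lambda>\<omega>. X \<omega> + Y \<omega>)"
proof -
  interpret prob_space P by fact
  have [measurable]: "X \<in> borel_measurable P" "Y \<in> borel_measurable P"
    using GX GY unfolding gaussian_rv_def by auto
  define mx where "mx = integral\<^sup>L P X"
  define vx where "vx = integral\<^sup>L P (\<lambda>\<omega>. (X \<omega>)\<^sup>2) - (integral\<^sup>L P X)\<^sup>2"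
  define my where "my = integral\<^sup>L P Y"
  define vy where "vy = integral\<^sup>L P (\<lambda>\<omega>. (Y \<omega>)\<^sup>2) - (integral\<^sup>L P Y)\<^sup>2"
  have vx: "vx \<ge> 0" unfolding vx_def using variance_eq[of X] gaussian_cf[OF P GX] integral_nonneg_AE[of "\<lambda>\<omega>. (X \<omega> - expectation X)\<^sup>2" P]
    by simp
  have vy: "vy \<ge> 0" unfolding vy_def using variance_eq[of Y] gaussian_cf[OF P GY] integral_nonneg_AE[of "\<lambda>\<omega>. (Y \<omega> - expectation Y)\<^sup>2" P]
    by simp
  show ?thesis
  proof (rule cf_gaussian[OF P, where \<mu>="mx + my" and v="vx + vy"])
    show "vx + vy \<ge> 0" using vx vy by simp
    fix t
    have "cf P (\<lambda>\<omega>. X \<omega> + Y \<omega>) t = cf P X t * cf P Y t"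
      using char_distr_add[OF I, of t] cf_distr by (metis borel_measurable_add \<open>X \<in> _\<close> \<open>Y \<in> _\<close>)
    also have "\<dots> = gex mx vx t * gex my vy t"
      using gaussian_cf(3)[OF P GX] gaussian_cf(3)[OF P GY] mx_def vx_def my_def vy_def by simp
    also have "\<dots> = gex (mx + my) (vx + vy) t"
      unfolding gex_def apply (simp add: exp_add[symmetric] algebra_simps flip: exp_of_real)
      apply (rule arg_cong[where f=exp]) by (simp add: field_simps)
    finally show "cf P (\<lambda>\<omega>. X \<omega> + Y \<omega>) t = gex (mx + my) (vx + vy) t" .
  qed simp
qed

definition sqi :: "'a measure \<Rightarrow> ('a \<Rightarrow> real) \<Rightarrow> bool" where
  "sqi M f \<longleftrightarrow> f \<in> borel_measurable M \<and> integrable M (\<lambda>x. (f x)\<^sup>2)"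

lemma sqi_meas: "sqi M f \<Longrightarrow> f \<in> borel_measurable M" by (simp add: sqi_def)
lemma sqi_int: "sqi M f \<Longrightarrow> integrable M (\<lambda>x. (f x)\<^sup>2)" by (simp add: sqi_def)

lemma sqi_mult_integrable:
  assumes "sqi M f" "sqi M g" shows "integrable M (\<lambda>x. f x * g x)"
proof (rule Bochner_Integration.integrable_bound)
  show "integrable M (\<lambda>x. (f x)\<^sup>2 + (g x)\<^sup>2)" using assms by (simp add: sqi_def)
  have [measurable]: "f \<in> borel_measurable M" "g \<in> borel_measurable M" using assms by (auto simp: sqi_def)
  show "(\<lambda>x. f x * g x) \<in> borel_measurable M" by measurable
  have "\<And>x. \<bar>f x * g x\<bar> \<le> (f x)\<^sup>2 + (g x)\<^sup>2"
  proof -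
    fix x
    have "0 \<le> (\<bar>f x\<bar> - \<bar>g x\<bar>)\<^sup>2" by simp
    then have "2 * \<bar>f x\<bar> * \<bar>g x\<bar> \<le> (f x)\<^sup>2 + (g x)\<^sup>2"
      by (simp add: power2_eq_square algebra_simps)
    moreover have "0 \<le> \<bar>f x\<bar> * \<bar>g x\<bar>" by simp
    moreover have "\<bar>f x * g x\<bar> = \<bar>f x\<bar> * \<bar>g x\<bar>" by (simp add: abs_mult)
    ultimately show "\<bar>f x * g x\<bar> \<le> (f x)\<^sup>2 + (g x)\<^sup>2" by linarith
  qed
  then show "AE x in M. norm (f x * g x) \<le> norm ((f x)\<^sup>2 + (g x)\<^sup>2)" by simp
qed

lemma sqi_add: assumes "sqi M f" "sqi M g" shows "sqi M (\<lambda>x. f x + g x)"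
proof -
  have [measurable]: "f \<in> borel_measurable M" "g \<in> borel_measurable M" using assms by (auto simp: sqi_def)
  have "integrable M (\<lambda>x. (f x)\<^sup>2 + (g x)\<^sup>2 + 2 * (f x * g x))"
    using sqi_mult_integrable[OF assms] assms by (simp add: sqi_def)
  then show ?thesis unfolding sqi_def by (simp add: power2_sum algebra_simps)
qed

lemma sqi_cmult: "sqi M f \<Longrightarrow> sqi M (\<lambda>x. c * f x)"
  unfolding sqi_def by (simp add: power_mult_distrib borel_measurable_times)

lemma sqi_diff: "sqi M f \<Longrightarrow> sqi M g \<Longrightarrow> sqi M (\<lambda>x. f x - g x)"
  using sqi_add[of M f "\<lambda>x. (-1) * g x"] sqi_cmult[of M g "-1"] by simp

lemma sqi_zero: "sqi M (\<lambda>x. 0)" unfolding sqi_def by simp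

lemma sqi_sum: "(\<And>i. i \<in> I \<Longrightarrow> sqi M (f i)) \<Longrightarrow> sqi M (\<lambda>x. \<Sum>i\<in>I. f i x)"
  by (induct I rule: infinite_finite_induct) (auto intro: sqi_add simp: sqi_zero)

lemma sqi_const: "finite_measure M \<Longrightarrow> sqi M (\<lambda>x. c)"
  unfolding sqi_def by (simp add: finite_measure.integrable_const)

lemma CS_integral:
  assumes f: "sqi M f" and g: "sqi M g"
  shows "\<bar>integral\<^sup>L M (\<lambda>x. f x * g x)\<bar> \<le> sqrt (integral\<^sup>L M (\<lambda>x. (f x)\<^sup>2)) * sqrt (integral\<^sup>L M (\<lambda>x. (g x)\<^sup>2))"
proof -
  define A where "A = integral\<^sup>L M (\<lambda>x. (f x)\<^sup>2)"
  define B where "B = integral\<^sup>L M (\<lambda>x. (g x)\<^sup>2)"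
  define C where "C = integral\<^sup>L M (\<lambda>x. f x * g x)"
  have iA: "integrable M (\<lambda>x. (f x)\<^sup>2)" and iB: "integrable M (\<lambda>x. (g x)\<^sup>2)"
    and iC: "integrable M (\<lambda>x. f x * g x)"
    using f g sqi_mult_integrable by (auto simp: sqi_def)
  have A0: "A \<ge> 0" unfolding A_def by (rule integral_nonneg_AE) simp
  have B0: "B \<ge> 0" unfolding B_def by (rule integral_nonneg_AE) simp
  have q: "0 \<le> l^2 * A - 2 * l * C + B" for l
  proof -
    have "0 \<le> integral\<^sup>L M (\<lambda>x. (l * f x - g x)\<^sup>2)" by (rule integral_nonneg_AE) simp
    also have "integral\<^sup>L M (\<lambda>x. (l * f x - g x)\<^sup>2) =
        integral\<^sup>L M (\<lambda>x. l^2 * (f x)\<^sup>2 - 2 * l * (f x * g x) + (g x)\<^sup>2)"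
      by (rule Bochner_Integration.integral_cong) (auto simp: power2_eq_square algebra_simps)
    also have "\<dots> = l^2 * A - 2 * l * C + B"
      using iA iB iC unfolding A_def B_def C_def by simp
    finally show ?thesis .
  qed
  have "C^2 \<le> A * B"
  proof (cases "A = 0")
    case True
    have "C = 0"
    proof (rule ccontr)
      assume "C \<noteq> 0"
      have "0 \<le> ((B + 1) / (2 * C))^2 * A - 2 * ((B + 1) / (2 * C)) * C + B" by (rule q)
      moreover have "2 * ((B + 1) / (2 * C)) * C = B+1" using \<open>C \<noteq> 0\<close> by (simp add: field_simps)
      moreover have "((B + 1) / (2 * C))^2 * A = 0" using True by simp
      ultimately show False by linarith
    qed
    then show ?thesis using True by simp
  next
    case False
    then have Ap: "A > 0" using A0 by simp
    have "0 \<le> (C / A)^2 * A - 2 * (C / A) * C + B" by (rule q)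
    then have "0 \<le> (B * A - C^2) / A" using Ap by (simp add: field_simps power2_eq_square)
    then show ?thesis using Ap by (simp add: zero_le_divide_iff algebra_simps)
  qed
  then have "sqrt (C^2) \<le> sqrt (A * B)" by (rule real_sqrt_le_mono)
  then show ?thesis unfolding A_def B_def C_def by (simp add: real_sqrt_mult)
qed

definition L2conv :: "'a measure \<Rightarrow> (nat \<Rightarrow> 'a \<Rightarrow> real) \<Rightarrow> ('a \<Rightarrow> real) \<Rightarrow> bool" where
  "L2conv M fs f \<longleftrightarrow> (\<forall>n. sqi M (fs n)) \<and> sqi M f \<and>
     (\<lambda>n. integral\<^sup>L M (\<lambda>x. (fs n x - f x)\<^sup>2)) \<longlonglongrightarrow> 0"

lemma L2conv_nn:
  assumes fs: "\<And>n. sqi M (fs n)" and f: "f \<in> borel_measurable M"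
    and lim: "(\<lambda>n. \<integral>\<^sup>+x. ennreal ((fs n x - f x)\<^sup>2) \<partial>M) \<longlonglongrightarrow> 0"
  shows "L2conv M fs f"
proof -
  have fsm: "\<And>n. fs n \<in> borel_measurable M" using fs by (simp add: sqi_def)
  have "eventually (\<lambda>n. (\<integral>\<^sup>+x. ennreal ((fs n x - f x)\<^sup>2) \<partial>M) < 1) sequentially"
    using lim by (rule order_tendstoD) simp
  then obtain N where "(\<integral>\<^sup>+x. ennreal ((fs N x - f x)\<^sup>2) \<partial>M) < 1"
    by (auto simp: eventually_sequentially)
  then have iN: "integrable M (\<lambda>x. (fs N x - f x)\<^sup>2)"
    by (intro integrableI_nonneg) (use fsm f in \<open>auto intro: order.strict_trans[of _ 1]\<close>)
  then have sN: "sqi M (\<lambda>x. fs N x - f x)" using fsm f by (simp add: sqi_def)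
  have "sqi M (\<lambda>x. fs N x - (fs N x - f x))" by (rule sqi_diff[OF fs sN])
  then have sf: "sqi M f" by simp
  have "(\<lambda>n. enn2real (\<integral>\<^sup>+x. ennreal ((fs n x - f x)\<^sup>2) \<partial>M)) \<longlonglongrightarrow> 0"
  proof -
    have l0: "(\<lambda>n. \<integral>\<^sup>+x. ennreal ((fs n x - f x)\<^sup>2) \<partial>M) \<longlonglongrightarrow> ennreal 0" using lim by simp
    show ?thesis using tendsto_enn2real[OF l0] by simp
  qed
  moreover have "\<And>n. integral\<^sup>L M (\<lambda>x. (fs n x - f x)\<^sup>2) = enn2real (\<integral>\<^sup>+x. ennreal ((fs n x - f x)\<^sup>2) \<partial>M)"
    by (rule integral_eq_nn_integral) (use fsm f in auto)
  ultimately show ?thesis unfolding L2conv_def using fs sf by simp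
qed

lemma L2conv_sqi: "L2conv M fs f \<Longrightarrow> sqi M f" by (simp add: L2conv_def)

lemma L2conv_prod:
  assumes F: "L2conv M fs f" and G: "L2conv M gs g"
  shows "(\<lambda>n. integral\<^sup>L M (\<lambda>x. fs n x * gs n x)) \<longlonglongrightarrow> integral\<^sup>L M (\<lambda>x. f x * g x)"
proof -
  have fs: "\<And>n. sqi M (fs n)" and f: "sqi M f" and gs: "\<And>n. sqi M (gs n)" and g: "sqi M g"
    and D: "(\<lambda>n. integral\<^sup>L M (\<lambda>x. (fs n x - f x)\<^sup>2)) \<longlonglongrightarrow> 0"
    and E: "(\<lambda>n. integral\<^sup>L M (\<lambda>x. (gs n x - g x)\<^sup>2)) \<longlonglongrightarrow> 0"
    using F G by (auto simp: L2conv_def)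
  define d where "d n = integral\<^sup>L M (\<lambda>x. (fs n x - f x)\<^sup>2)" for n
  define e where "e n = integral\<^sup>L M (\<lambda>x. (gs n x - g x)\<^sup>2)" for n
  define A where "A = integral\<^sup>L M (\<lambda>x. (f x)\<^sup>2)"
  define B where "B = integral\<^sup>L M (\<lambda>x. (g x)\<^sup>2)"
  have sd: "\<And>n. sqi M (\<lambda>x. fs n x - f x)" using fs f by (simp add: sqi_diff)
  have se: "\<And>n. sqi M (\<lambda>x. gs n x - g x)" using gs g by (simp add: sqi_diff)
  have eq: "integral\<^sup>L M (\<lambda>x. fs n x * gs n x) - integral\<^sup>L M (\<lambda>x. f x * g x) =
      integral\<^sup>L M (\<lambda>x. (fs n x - f x) * (gs n x - g x)) + integral\<^sup>L M (\<lambda>x. (fs n x - f x) * g x)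
      + integral\<^sup>L M (\<lambda>x. f x * (gs n x - g x))" for n
  proof -
    have i1: "integrable M (\<lambda>x. (fs n x - f x) * (gs n x - g x))" using sd se by (rule sqi_mult_integrable)
    have i2: "integrable M (\<lambda>x. (fs n x - f x) * g x)" using sd g by (rule sqi_mult_integrable)
    have i3: "integrable M (\<lambda>x. f x * (gs n x - g x))" using f se by (rule sqi_mult_integrable)
    have i4: "integrable M (\<lambda>x. f x * g x)" using f g by (rule sqi_mult_integrable)
    have "integral\<^sup>L M (\<lambda>x. fs n x * gs n x) = integral\<^sup>L M (\<lambda>x. (fs n x - f x) * (gs n x - g x)
        + (fs n x - f x) * g x + f x * (gs n x - g x) + f x * g x)"
      by (rule Bochner_Integration.integral_cong) (auto simp: algebra_simps)
    also have "\<dots> = integral\<^sup>L M (\<lambda>x. (fs n x - f x) * (gs n x - g x)) + integral\<^sup>L M (\<lambda>x. (fs n x - f x) * g x)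
      + integral\<^sup>L M (\<lambda>x. f x * (gs n x - g x)) + integral\<^sup>L M (\<lambda>x. f x * g x)"
      using i1 i2 i3 i4 by simp
    finally show ?thesis by simp
  qed
  have tri: "\<bar>a + b + c\<bar> \<le> \<bar>a\<bar> + \<bar>b\<bar> + \<bar>c\<bar>" for a b c :: real by arith
  have bnd: "norm (integral\<^sup>L M (\<lambda>x. fs n x * gs n x) - integral\<^sup>L M (\<lambda>x. f x * g x))
      \<le> sqrt (d n) * sqrt (e n) + sqrt (d n) * sqrt B + sqrt A * sqrt (e n)" for n
    unfolding eq real_norm_def d_def e_def A_def B_def
    apply (rule order_trans[OF tri])
    apply (rule add_mono)+
    apply (rule CS_integral[OF sd se])
    apply (rule CS_integral[OF sd g])
    apply (rule CS_integral[OF f se])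
    done
  have "(\<lambda>n. sqrt (d n) * sqrt (e n) + sqrt (d n) * sqrt B + sqrt A * sqrt (e n)) \<longlonglongrightarrow>
      sqrt 0 * sqrt 0 + sqrt 0 * sqrt B + sqrt A * sqrt 0"
    using D E unfolding d_def[symmetric] e_def[symmetric] by (intro tendsto_intros)
  then have lim0: "(\<lambda>n. sqrt (d n) * sqrt (e n) + sqrt (d n) * sqrt B + sqrt A * sqrt (e n)) \<longlonglongrightarrow> 0" by simp
  have "(\<lambda>n. integral\<^sup>L M (\<lambda>x. fs n x * gs n x) - integral\<^sup>L M (\<lambda>x. f x * g x)) \<longlonglongrightarrow> 0"
    by (rule Lim_null_comparison[OF always_eventually lim0]) (intro allI bnd)
  then show ?thesis by (simp add: LIM_zero_iff)
qed

lemma L2conv_const: "sqi M f \<Longrightarrow> L2conv M (\<lambda>n. f) f"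
  unfolding L2conv_def by simp

lemma L2conv_add:
  assumes F: "L2conv M fs f" and G: "L2conv M gs g"
  shows "L2conv M (\<lambda>n x. fs n x + gs n x) (\<lambda>x. f x + g x)"
proof -
  have fs: "\<And>n. sqi M (fs n)" and f: "sqi M f" and gs: "\<And>n. sqi M (gs n)" and g: "sqi M g"
    and D: "(\<lambda>n. integral\<^sup>L M (\<lambda>x. (fs n x - f x)\<^sup>2)) \<longlonglongrightarrow> 0"
    and E: "(\<lambda>n. integral\<^sup>L M (\<lambda>x. (gs n x - g x)\<^sup>2)) \<longlonglongrightarrow> 0"
    using F G by (auto simp: L2conv_def)
  have sd: "\<And>n. sqi M (\<lambda>x. fs n x - f x)" using fs f by (simp add: sqi_diff)
  have se: "\<And>n. sqi M (\<lambda>x. gs n x - g x)" using gs g by (simp add: sqi_diff)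
  have bnd: "norm (integral\<^sup>L M (\<lambda>x. (fs n x + gs n x - (f x + g x))\<^sup>2)) \<le>
     2 * integral\<^sup>L M (\<lambda>x. (fs n x - f x)\<^sup>2) + 2 * integral\<^sup>L M (\<lambda>x. (gs n x - g x)\<^sup>2)" for n
  proof -
    have i: "integrable M (\<lambda>x. (fs n x + gs n x - (f x + g x))\<^sup>2)"
      using sqi_add[OF sd se, of n] by (simp add: sqi_def algebra_simps)
    have "0 \<le> integral\<^sup>L M (\<lambda>x. (fs n x + gs n x - (f x + g x))\<^sup>2)"
      by (rule integral_nonneg_AE) simp
    moreover have "integral\<^sup>L M (\<lambda>x. (fs n x + gs n x - (f x + g x))\<^sup>2) \<le>
        integral\<^sup>L M (\<lambda>x. 2 * (fs n x - f x)\<^sup>2 + 2 * (gs n x - g x)\<^sup>2)"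
    proof (rule integral_mono[OF i])
      show "integrable M (\<lambda>x. 2 * (fs n x - f x)\<^sup>2 + 2 * (gs n x - g x)\<^sup>2)"
        using sd se by (simp add: sqi_def)
      fix x
      have pw: "(a + b)\<^sup>2 \<le> 2 * a\<^sup>2 + 2 * b\<^sup>2" for a b :: real
      proof -
        have "(a + b)\<^sup>2 = 2 * a\<^sup>2 + 2 * b\<^sup>2 - (a - b)\<^sup>2" by (simp add: power2_eq_square algebra_simps)
        moreover have "0 \<le> (a - b)\<^sup>2" by simp
        ultimately show ?thesis by linarith
      qed
      have e: "fs n x + gs n x - (f x + g x) = (fs n x - f x) + (gs n x - g x)" by simp
      show "(fs n x + gs n x - (f x + g x))\<^sup>2 \<le> 2 * (fs n x - f x)\<^sup>2 + 2 * (gs n x - g x)\<^sup>2"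
        unfolding e by (rule pw)
    qed
    moreover have "integral\<^sup>L M (\<lambda>x. 2 * (fs n x - f x)\<^sup>2 + 2 * (gs n x - g x)\<^sup>2) =
       2 * integral\<^sup>L M (\<lambda>x. (fs n x - f x)\<^sup>2) + 2 * integral\<^sup>L M (\<lambda>x. (gs n x - g x)\<^sup>2)"
      using sd se by (simp add: sqi_def)
    ultimately show ?thesis by simp
  qed
  have "(\<lambda>n. 2 * integral\<^sup>L M (\<lambda>x. (fs n x - f x)\<^sup>2) + 2 * integral\<^sup>L M (\<lambda>x. (gs n x - g x)\<^sup>2)) \<longlonglongrightarrow> 2 * 0 + 2 * 0"
    using D E by (intro tendsto_intros)
  then have lim0: "(\<lambda>n. 2 * integral\<^sup>L M (\<lambda>x. (fs n x - f x)\<^sup>2) + 2 * integral\<^sup>L M (\<lambda>x. (gs n x - g x)\<^sup>2)) \<longlonglongrightarrow> 0"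
    by simp
  have "(\<lambda>n. integral\<^sup>L M (\<lambda>x. (fs n x + gs n x - (f x + g x))\<^sup>2)) \<longlonglongrightarrow> 0"
    by (rule Lim_null_comparison[OF always_eventually lim0]) (intro allI bnd)
  then show ?thesis unfolding L2conv_def using fs gs f g by (auto intro: sqi_add)
qed

lemma L2conv_cmult:
  assumes F: "L2conv M fs f"
  shows "L2conv M (\<lambda>n x. c * fs n x) (\<lambda>x. c * f x)"
proof -
  have "(\<lambda>n. c^2 * integral\<^sup>L M (\<lambda>x. (fs n x - f x)\<^sup>2)) \<longlonglongrightarrow> c^2 * 0"
    using F unfolding L2conv_def by (intro tendsto_intros) auto
  moreover have "integral\<^sup>L M (\<lambda>x. (c * fs n x - c * f x)\<^sup>2) = c^2 * integral\<^sup>L M (\<lambda>x. (fs n x - f x)\<^sup>2)" for n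
    by (simp add: right_diff_distrib[symmetric] power_mult_distrib)
  ultimately show ?thesis using F unfolding L2conv_def by (auto intro: sqi_cmult)
qed

lemma L2conv_sum:
  assumes "\<And>i. i \<in> I \<Longrightarrow> L2conv M (fs i) (f i)"
  shows "L2conv M (\<lambda>n x. \<Sum>i\<in>I. fs i n x) (\<lambda>x. \<Sum>i\<in>I. f i x)"
  using assms
proof (induct I rule: infinite_finite_induct)
  case (infinite A) then show ?case by (simp add: L2conv_const sqi_zero)
next
  case empty then show ?case by (simp add: L2conv_const sqi_zero)
next
  case (insert i I)
  then show ?case by (simp add: L2conv_add)
qed

lemma iexp_lip: "norm (iexp a - iexp b) \<le> \<bar>a - b\<bar>"
proof -
  have "iexp a - iexp b = iexp b * (iexp (a - b) - 1)"
    by (simp add: algebra_simps exp_diff[symmetric] exp_add[symmetric] flip: exp_of_real)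
  then have "norm (iexp a - iexp b) = norm (iexp (a - b) - 1)"
    by (simp add: norm_mult norm_exp_i_times)
  also have "\<dots> \<le> \<bar>a - b\<bar>" using iexp_approx1[of "a - b" 0] by simp
  finally show ?thesis .
qed

lemma gaussian_L2lim:
  assumes P: "prob_space P" and G: "\<And>n. gaussian_rv P (X n)" and L: "L2conv P X Y"
  shows "gaussian_rv P Y"
proof -
  interpret prob_space P by fact
  have sY: "sqi P Y" using L by (simp add: L2conv_def)
  have Ym[measurable]: "Y \<in> borel_measurable P" using sY by (simp add: sqi_def)
  have sX: "\<And>n. sqi P (X n)" using L by (simp add: L2conv_def)
  have Xm[measurable]: "\<And>n. X n \<in> borel_measurable P" using sX by (simp add: sqi_def)
  have D: "(\<lambda>n. integral\<^sup>L P (\<lambda>x. (X n x - Y x)\<^sup>2)) \<longlonglongrightarrow> 0" using L by (simp add: L2conv_def)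
  have one: "L2conv P (\<lambda>n x. 1) (\<lambda>x. 1)"
    by (rule L2conv_const, rule sqi_const) (simp add: finite_measure_axioms)
  have m: "(\<lambda>n. integral\<^sup>L P (X n)) \<longlonglongrightarrow> integral\<^sup>L P Y"
    using L2conv_prod[OF L one] by simp
  have m2: "(\<lambda>n. integral\<^sup>L P (\<lambda>x. (X n x)\<^sup>2)) \<longlonglongrightarrow> integral\<^sup>L P (\<lambda>x. (Y x)\<^sup>2)"
    using L2conv_prod[OF L L] by (simp add: power2_eq_square)
  define \<mu> where "\<mu> = integral\<^sup>L P Y"
  define v where "v = integral\<^sup>L P (\<lambda>x. (Y x)\<^sup>2) - (integral\<^sup>L P Y)\<^sup>2"
  have iY: "integrable P Y"
    using sqi_mult_integrable[OF sY sqi_const[of P 1]] finite_measure_axioms by simp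
  have iY2: "integrable P (\<lambda>x. (Y x)\<^sup>2)" using sY by (simp add: sqi_def)
  have v0: "v \<ge> 0" unfolding v_def
    using variance_eq[OF iY iY2] integral_nonneg_AE[of "\<lambda>\<omega>. (Y \<omega> - expectation Y)\<^sup>2" P] by simp
  show ?thesis
  proof (rule cf_gaussian[OF P Ym v0, of \<mu>])
    fix t
    have lim1: "(\<lambda>n. cf P (X n) t) \<longlonglongrightarrow> gex \<mu> v t"
    proof -
      have "(\<lambda>n. gex (integral\<^sup>L P (X n)) (integral\<^sup>L P (\<lambda>x. (X n x)\<^sup>2) - (integral\<^sup>L P (X n))\<^sup>2) t)
          \<longlonglongrightarrow> gex \<mu> v t"
        unfolding gex_def \<mu>_def v_def
        by (intro tendsto_intros m m2) simp_all
      then show ?thesis using gaussian_cf(3)[OF P G] by simp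
    qed
    have lim2: "(\<lambda>n. cf P (X n) t) \<longlonglongrightarrow> cf P Y t"
    proof -
      have bnd: "norm (cf P (X n) t - cf P Y t) \<le> \<bar>t\<bar> * sqrt (integral\<^sup>L P (\<lambda>x. (X n x - Y x)\<^sup>2))" for n
      proof -
        have ii: "integrable P (\<lambda>\<omega>. iexp (t * X n \<omega>))" "integrable P (\<lambda>\<omega>. iexp (t * Y \<omega>))"
          by (auto intro!: integrable_iexp)
        have sD: "sqi P (\<lambda>x. \<bar>X n x - Y x\<bar>)"
          using sqi_diff[OF sX sY, of n] by (simp add: sqi_def)
        have iD: "integrable P (\<lambda>x. \<bar>X n x - Y x\<bar>)"
          using sqi_mult_integrable[OF sD sqi_const[of P 1]] finite_measure_axioms by simp
        have "cf P (X n) t - cf P Y t = (CLINT \<omega>|P. iexp (t * X n \<omega>) - iexp (t * Y \<omega>))"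
          unfolding cf_def using ii by simp
        then have "norm (cf P (X n) t - cf P Y t) \<le> (LINT \<omega>|P. norm (iexp (t * X n \<omega>) - iexp (t * Y \<omega>)))"
          using integral_norm_bound by metis
        also have "\<dots> \<le> (LINT \<omega>|P. \<bar>t\<bar> * \<bar>X n \<omega> - Y \<omega>\<bar>)"
        proof (rule integral_mono)
          show "integrable P (\<lambda>\<omega>. norm (iexp (t * X n \<omega>) - iexp (t * Y \<omega>)))"
            using ii by auto
          show "integrable P (\<lambda>\<omega>. \<bar>t\<bar> * \<bar>X n \<omega> - Y \<omega>\<bar>)" using iD by simp
          fix \<omega>
          show "norm (iexp (t * X n \<omega>) - iexp (t * Y \<omega>)) \<le> \<bar>t\<bar> * \<bar>X n \<omega> - Y \<omega>\<bar>"
            using iexp_lip[of "t * X n \<omega>" "t * Y \<omega>"] by (simp add: abs_mult right_diff_distrib[symmetric])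
        qed
        also have "\<dots> = \<bar>t\<bar> * (LINT \<omega>|P. \<bar>X n \<omega> - Y \<omega>\<bar> * 1)" by simp
        also have "\<dots> \<le> \<bar>t\<bar> * (sqrt (LINT \<omega>|P. (\<bar>X n \<omega> - Y \<omega>\<bar>)\<^sup>2) * sqrt (LINT \<omega>|P. 1\<^sup>2))"
          apply (rule mult_left_mono)
          using CS_integral[OF sD sqi_const[of P 1]] finite_measure_axioms apply simp
          by simp
        also have "\<dots> = \<bar>t\<bar> * sqrt (integral\<^sup>L P (\<lambda>x. (X n x - Y x)\<^sup>2))" by (simp add: prob_space)
        finally show ?thesis .
      qed
      have "(\<lambda>n. \<bar>t\<bar> * sqrt (integral\<^sup>L P (\<lambda>x. (X n x - Y x)\<^sup>2))) \<longlonglongrightarrow> \<bar>t\<bar> * sqrt 0"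
        by (intro tendsto_intros D)
      then have l0: "(\<lambda>n. \<bar>t\<bar> * sqrt (integral\<^sup>L P (\<lambda>x. (X n x - Y x)\<^sup>2))) \<longlonglongrightarrow> 0" by simp
      have "(\<lambda>n. cf P (X n) t - cf P Y t) \<longlonglongrightarrow> 0"
        by (rule Lim_null_comparison[OF always_eventually l0]) (intro allI bnd)
      then show ?thesis by (simp add: LIM_zero_iff)
    qed
    show "cf P Y t = gex \<mu> v t" using LIMSEQ_unique[OF lim2 lim1] .
  qed
qed

definition LC :: "real \<Rightarrow> (real \<Rightarrow> 'a \<Rightarrow> real) \<Rightarrow> ('a \<Rightarrow> real) set" where
  "LC T B = {X. \<exists>J c. finite J \<and> J \<subseteq> {0..T} \<and> (\<forall>\<omega>. X \<omega> = (\<Sum>j\<in>J. c j * B j \<omega>))}"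

lemma LC_zero: "(\<lambda>\<omega>. 0) \<in> LC T B"
  unfolding LC_def by (rule CollectI, rule exI[of _ "{}"]) auto

lemma LC_B: "j \<in> {0..T} \<Longrightarrow> B j \<in> LC T B"
  unfolding LC_def by (rule CollectI, rule exI[of _ "{j}"], rule exI[of _ "\<lambda>_. 1"]) auto

lemma LC_cmult: "X \<in> LC T B \<Longrightarrow> (\<lambda>\<omega>. a * X \<omega>) \<in> LC T B"
  unfolding LC_def
proof (clarify)
  fix J c assume "finite J" "J \<subseteq> {0..T}" "\<forall>\<omega>. X \<omega> = (\<Sum>j\<in>J. c j * B j \<omega>)"
  then show "\<exists>J c. finite J \<and> J \<subseteq> {0..T} \<and> (\<forall>\<omega>. a * X \<omega> = (\<Sum>j\<in>J. c j * B j \<omega>))"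
    by (intro exI[of _ J] exI[of _ "\<lambda>j. a * c j"]) (auto simp: sum_distrib_left mult.assoc)
qed

lemma LC_add: "X \<in> LC T B \<Longrightarrow> Y \<in> LC T B \<Longrightarrow> (\<lambda>\<omega>. X \<omega> + Y \<omega>) \<in> LC T B"
  unfolding LC_def
proof (clarify)
  fix J c J' c' assume J: "finite J" "J \<subseteq> {0..T}" "\<forall>\<omega>. X \<omega> = (\<Sum>j\<in>J. c j * B j \<omega>)"
    and J': "finite J'" "J' \<subseteq> {0..T}" "\<forall>\<omega>. Y \<omega> = (\<Sum>j\<in>J'. c' j * B j \<omega>)"
  define d where "d j = (if j \<in> J then c j else 0) + (if j \<in> J' then c' j else 0)" for j
  have "(\<Sum>j\<in>J \<union> J'. d j * B j \<omega>) = (\<Sum>j\<in>J. c j * B j \<omega>) + (\<Sum>j\<in>J'. c' j * B j \<omega>)" for \<omega>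
  proof -
    have dj: "d j * B j \<omega> = (if j \<in> J then c j * B j \<omega> else 0) + (if j \<in> J' then c' j * B j \<omega> else 0)" for j
      by (simp add: d_def distrib_right)
    have "(\<Sum>j\<in>J \<union> J'. d j * B j \<omega>) = (\<Sum>j\<in>J \<union> J'. (if j \<in> J then c j * B j \<omega> else 0))
        + (\<Sum>j\<in>J \<union> J'. (if j \<in> J' then c' j * B j \<omega> else 0))"
      unfolding dj by (rule sum.distrib)
    also have "(\<Sum>j\<in>J \<union> J'. (if j \<in> J then c j * B j \<omega> else 0)) = (\<Sum>j\<in>J. c j * B j \<omega>)"
      using J J' by (simp add: sum.If_cases Int_absorb1)
    also have "(\<Sum>j\<in>J \<union> J'. (if j \<in> J' then c' j * B j \<omega> else 0)) = (\<Sum>j\<in>J'. c' j * B j \<omega>)"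
      using J J' by (simp add: sum.If_cases Int_absorb1)
    finally show ?thesis .
  qed
  then show "\<exists>Ja ca. finite Ja \<and> Ja \<subseteq> {0..T} \<and> (\<forall>\<omega>. X \<omega> + Y \<omega> = (\<Sum>j\<in>Ja. ca j * B j \<omega>))"
    using J J' by (intro exI[of _ "J \<union> J'"] exI[of _ d]) auto
qed

lemma LC_diff: "X \<in> LC T B \<Longrightarrow> Y \<in> LC T B \<Longrightarrow> (\<lambda>\<omega>. X \<omega> - Y \<omega>) \<in> LC T B"
  using LC_add[of X T B "\<lambda>\<omega>. (-1) * Y \<omega>"] LC_cmult[of Y T B "-1"] by simp

lemma LC_sum: "(\<And>i. i \<in> I \<Longrightarrow> X i \<in> LC T B) \<Longrightarrow> (\<lambda>\<omega>. \<Sum>i\<in>I. X i \<omega>) \<in> LC T B"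
  by (induct I rule: infinite_finite_induct) (auto intro: LC_add simp: LC_zero)

definition vl :: "real \<Rightarrow> (real \<times> real \<times> real) list \<Rightarrow> bool" where
  "vl T l \<longleftrightarrow> (\<forall>(a, s, t)\<in>set l. 0 \<le> s \<and> s \<le> t \<and> t \<le> T)"

lemma step_int_Nil[simp]: "step_int B [] \<omega> = 0" by (simp add: step_int_def)
lemma step_int_Cons[simp]: "step_int B ((a, s, t) # l) \<omega> = a * (B t \<omega> - B s \<omega>) + step_int B l \<omega>"
  by (simp add: step_int_def)
lemma step_fun_Nil[simp]: "step_fun [] x = 0" by (simp add: step_fun_def)
lemma step_fun_Cons[simp]: "step_fun ((a, s, t) # l) x = a * indicator {s<..t} x + step_fun l x"
  by (simp add: step_fun_def)
lemma vl_Nil[simp]: "vl T []" by (simp add: vl_def)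
lemma vl_Cons[simp]: "vl T ((a, s, t) # l) \<longleftrightarrow> 0 \<le> s \<and> s \<le> t \<and> t \<le> T \<and> vl T l"
  by (simp add: vl_def)

lemma LC_step: "vl T l \<Longrightarrow> step_int B l \<in> LC T B"
proof (induct l)
  case Nil
  then show ?case using LC_zero[of T B] by (simp add: fun_eq_iff)
next
  case (Cons x l)
  obtain a s t where x: "x = (a, s, t)" by (cases x) auto
  have "(\<lambda>\<omega>. a * (B t \<omega> - B s \<omega>) + step_int B l \<omega>) \<in> LC T B"
    using Cons x by (intro LC_add LC_cmult LC_diff LC_B) auto
  then show ?case using x by (simp add: fun_eq_iff)
qed

lemma LC_gauss:
  assumes JG: "jointly_gaussian P {0..T} B" and X: "X \<in> LC T B"
  shows "gaussian_rv P X"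
proof -
  obtain J c where J: "finite J" "J \<subseteq> {0..T}" "\<forall>\<omega>. X \<omega> = (\<Sum>j\<in>J. c j * B j \<omega>)"
    using X unfolding LC_def by auto
  have "X = (\<lambda>\<omega>. \<Sum>j\<in>J. c j * B j \<omega>)" using J by auto
  then show ?thesis using JG[unfolded jointly_gaussian_def, rule_format, of J c] J by simp
qed

lemma LC_fun:
  assumes X: "X \<in> LC T B"
  shows "\<exists>g\<in>borel_measurable (Pi\<^sub>M {0..T} (\<lambda>_. borel)). \<forall>\<omega>. X \<omega> = g (\<lambda>t\<in>{0..T}. B t \<omega>)"
proof -
  obtain J c where J: "finite J" "J \<subseteq> {0..T}" "\<forall>\<omega>. X \<omega> = (\<Sum>j\<in>J. c j * B j \<omega>)"
    using X unfolding LC_def by auto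
  have meas: "(\<lambda>h. \<Sum>j\<in>J. c j * h j) \<in> borel_measurable (Pi\<^sub>M {0..T} (\<lambda>_. borel))"
    using J by (intro borel_measurable_sum borel_measurable_times measurable_const
        measurable_component_singleton) auto
  show ?thesis
  proof (rule bexI[OF _ meas], intro allI)
    fix \<omega>
    have "(\<Sum>j\<in>J. c j * (\<lambda>t\<in>{0..T}. B t \<omega>) j) = (\<Sum>j\<in>J. c j * B j \<omega>)"
      by (rule sum.cong) (use J(2) in auto)
    then show "X \<omega> = (\<lambda>h. \<Sum>j\<in>J. c j * h j) (\<lambda>t\<in>{0..T}. B t \<omega>)" using J(3) by simp
  qed
qed

lemma cgf_gauss1:
  assumes "jointly_gaussian P I B" "j \<in> I" shows "gaussian_rv P (B j)"
proof -
  have "gaussian_rv P (\<lambda>\<omega>. \<Sum>i\<in>{j}. 1 * B i \<omega>)"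
    using assms(1)[unfolded jointly_gaussian_def, rule_format, of "{j}" "\<lambda>_. 1"] assms(2) by simp
  then show ?thesis by simp
qed

lemma LC_mean:
  assumes P: "prob_space P" and C: "centered_gaussian_family P {0..T} B K" and X: "X \<in> LC T B"
  shows "integral\<^sup>L P X = 0"
proof -
  obtain J c where J: "finite J" "J \<subseteq> {0..T}" "\<forall>\<omega>. X \<omega> = (\<Sum>j\<in>J. c j * B j \<omega>)"
    using X unfolding LC_def by auto
  have JG: "jointly_gaussian P {0..T} B" using C by (simp add: centered_gaussian_family_def)
  have i: "\<And>j. j \<in> J \<Longrightarrow> integrable P (B j)" using gaussian_cf(1)[OF P cgf_gauss1[OF JG]] J by auto
  have "X = (\<lambda>\<omega>. \<Sum>j\<in>J. c j * B j \<omega>)" using J by auto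
  then have "integral\<^sup>L P X = integral\<^sup>L P (\<lambda>\<omega>. \<Sum>j\<in>J. c j * B j \<omega>)" by simp
  also have "\<dots> = (\<Sum>j\<in>J. c j * integral\<^sup>L P (B j))"
    using i by (simp add: Bochner_Integration.integral_sum)
  also have "\<dots> = 0" using C J unfolding centered_gaussian_family_def by (auto intro!: sum.neutral)
  finally show ?thesis .
qed

lemma gauss_sqi: "prob_space P \<Longrightarrow> gaussian_rv P X \<Longrightarrow> sqi P X"
  using gaussian_cf(2) unfolding sqi_def gaussian_rv_def by blast

lemma LC_sqi: "prob_space P \<Longrightarrow> jointly_gaussian P {0..T} B \<Longrightarrow> X \<in> LC T B \<Longrightarrow> sqi P X"
  using gauss_sqi LC_gauss by blast

definition LT :: "real \<Rightarrow> real measure" where "LT T = restrict_space lborel {0..T}"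

lemma space_LT[simp]: "space (LT T) = {0..T}" by (simp add: LT_def)

lemma LT_finite: "finite_measure (LT T)"
proof
  show "emeasure (LT T) (space (LT T)) \<noteq> \<infinity>"
  proof -
    have "emeasure lborel {0..T} < \<infinity>" by (cases "0 \<le> T") auto
    then show ?thesis unfolding LT_def by (subst emeasure_restrict_space) auto
  qed
qed

lemma LT_meas: "f \<in> borel_measurable borel \<Longrightarrow> f \<in> borel_measurable (LT T)"
  unfolding LT_def by (rule measurable_restrict_space1) simp

lemma sqi_LT_bounded:
  assumes f: "f \<in> borel_measurable borel" and b: "\<And>x. \<bar>f x\<bar> \<le> C"
  shows "sqi (LT T) f"
proof -
  interpret finite_measure "LT T" by (rule LT_finite)
  have m[measurable]: "f \<in> borel_measurable (LT T)" by (rule LT_meas[OF f])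
  have "integrable (LT T) (\<lambda>x. (f x)\<^sup>2)"
  proof (rule integrable_const_bound[where B="C^2"])
    show "AE x in LT T. norm ((f x)\<^sup>2) \<le> C^2"
    proof (rule AE_I2)
      fix x
      have "\<bar>f x\<bar> \<le> C" by (rule b)
      then have "\<bar>f x\<bar>^2 \<le> C^2" by (intro power_mono) auto
      then show "norm ((f x)\<^sup>2) \<le> C^2" by simp
    qed
  qed simp
  then show ?thesis using m by (simp add: sqi_def)
qed

lemma sqi_LT_ind: "sqi (LT T) (indicator {s<..t} :: real \<Rightarrow> real)"
  by (rule sqi_LT_bounded[where C=1]) (auto split: split_indicator)

lemma sqi_LT_step: "sqi (LT T) (step_fun l)"
proof (induct l)
  case Nil
  then show ?case using sqi_zero[of "LT T"] by (simp add: fun_eq_iff)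
next
  case (Cons x l)
  obtain a s t where x: "x = (a, s, t)" by (cases x) auto
  have "sqi (LT T) (\<lambda>y. a * indicator {s<..t} y + step_fun l y)"
    by (intro sqi_add sqi_cmult sqi_LT_ind Cons)
  then show ?case using x by (simp add: fun_eq_iff)
qed

lemma incr_formula:
  fixes s t s' t' :: real
  assumes "s \<le> t" "s' \<le> t'"
  shows "min t t' - min t s' - min s t' + min s s' = (if max s s' \<le> min t t' then min t t' - max s s' else 0)"
  using assms by (auto simp: min_def max_def)

lemma int_LT_ind:
  assumes "0 \<le> s" "s \<le> t" "t \<le> T" "0 \<le> s'" "s' \<le> t'" "t' \<le> T"
  shows "integral\<^sup>L (LT T) (\<lambda>x. indicator {s<..t} x * indicator {s'<..t'} x) =
     min t t' - min t s' - min s t' + min s s'"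
proof -
  have "integral\<^sup>L (LT T) (\<lambda>x. indicator {s<..t} x * indicator {s'<..t'} x) =
      (integral\<^sup>L lborel (\<lambda>x. indicator {0..T} x *\<^sub>R (indicator {s<..t} x * indicator {s'<..t'} x)) :: real)"
    unfolding LT_def by (subst integral_restrict_space) simp_all
  also have "\<dots> = integral\<^sup>L lborel (indicator {max s s'<..min t t'})"
    by (rule Bochner_Integration.integral_cong) (use assms in \<open>auto split: split_indicator\<close>)
  also have "\<dots> = measure lborel {max s s'<..min t t'}" by simp
  also have "\<dots> = (if max s s' \<le> min t t' then min t t' - max s s' else 0)"
    by (cases "max s s' \<le> min t t'") auto
  finally show ?thesis using incr_formula[of s t s' t'] assms by simp
qed

locale bm_setting =
  fixes P :: "'a measure" and T :: real and B :: "real \<Rightarrow> 'a \<Rightarrow> real"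
  assumes P: "prob_space P" and BM: "brownian_motion_on P T B"
begin

lemma C: "centered_gaussian_family P {0..T} B (\<lambda>s t. min s t)"
  using BM by (simp add: brownian_motion_on_def)

lemma JG: "jointly_gaussian P {0..T} B"
  using C by (simp add: centered_gaussian_family_def)

lemma cov: "s \<in> {0..T} \<Longrightarrow> t \<in> {0..T} \<Longrightarrow> integral\<^sup>L P (\<lambda>\<omega>. B s \<omega> * B t \<omega>) = min s t"
  using C by (simp add: centered_gaussian_family_def)

lemma sqiLC: "X \<in> LC T B \<Longrightarrow> sqi P X"
  by (rule LC_sqi[OF P JG])

lemma sqiB: "s \<in> {0..T} \<Longrightarrow> sqi P (B s)"
  by (rule sqiLC, rule LC_B)

lemma cov_incr:
  assumes "0 \<le> s" "s \<le> t" "t \<le> T" "0 \<le> s'" "s' \<le> t'" "t' \<le> T"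
  shows "integral\<^sup>L P (\<lambda>\<omega>. (B t \<omega> - B s \<omega>) * (B t' \<omega> - B s' \<omega>)) =
     min t t' - min t s' - min s t' + min s s'"
proof -
  have i: "integrable P (\<lambda>\<omega>. B x \<omega> * B y \<omega>)" if "x \<in> {0..T}" "y \<in> {0..T}" for x y
    using sqi_mult_integrable[OF sqiB sqiB] that by blast
  have "integral\<^sup>L P (\<lambda>\<omega>. (B t \<omega> - B s \<omega>) * (B t' \<omega> - B s' \<omega>)) =
      integral\<^sup>L P (\<lambda>\<omega>. B t \<omega> * B t' \<omega> - B t \<omega> * B s' \<omega> - B s \<omega> * B t' \<omega> + B s \<omega> * B s' \<omega>)"
    by (rule Bochner_Integration.integral_cong) (auto simp: algebra_simps)
  also have "\<dots> = integral\<^sup>L P (\<lambda>\<omega>. B t \<omega> * B t' \<omega>) - integral\<^sup>L P (\<lambda>\<omega>. B t \<omega> * B s' \<omega>)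
      - integral\<^sup>L P (\<lambda>\<omega>. B s \<omega> * B t' \<omega>) + integral\<^sup>L P (\<lambda>\<omega>. B s \<omega> * B s' \<omega>)"
    using i assms by simp
  also have "\<dots> = min t t' - min t s' - min s t' + min s s'"
    using assms by (simp add: cov)
  finally show ?thesis .
qed

lemma iso1:
  assumes "vl T l'" "0 \<le> s" "s \<le> t" "t \<le> T"
  shows "integral\<^sup>L P (\<lambda>\<omega>. (B t \<omega> - B s \<omega>) * step_int B l' \<omega>) =
    integral\<^sup>L (LT T) (\<lambda>x. indicator {s<..t} x * step_fun l' x)"
  using assms(1)
proof (induct l')
  case Nil
  then show ?case by simp
next
  case (Cons x l)
  obtain a s' t' where x: "x = (a, s', t')" by (cases x) auto
  have v: "0 \<le> s'" "s' \<le> t'" "t' \<le> T" "vl T l" using Cons.prems x by auto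
  have sD: "sqi P (\<lambda>\<omega>. B t \<omega> - B s \<omega>)" "sqi P (\<lambda>\<omega>. B t' \<omega> - B s' \<omega>)"
    using assms v by (auto intro!: sqiLC LC_diff LC_B)
  have sS: "sqi P (step_int B l)" using v by (intro sqiLC LC_step)
  have "integral\<^sup>L P (\<lambda>\<omega>. (B t \<omega> - B s \<omega>) * step_int B (x # l) \<omega>) =
     integral\<^sup>L P (\<lambda>\<omega>. a * ((B t \<omega> - B s \<omega>) * (B t' \<omega> - B s' \<omega>)) + (B t \<omega> - B s \<omega>) * step_int B l \<omega>)"
    using x by (simp add: algebra_simps)
  also have "\<dots> = a * integral\<^sup>L P (\<lambda>\<omega>. (B t \<omega> - B s \<omega>) * (B t' \<omega> - B s' \<omega>))
      + integral\<^sup>L P (\<lambda>\<omega>. (B t \<omega> - B s \<omega>) * step_int B l \<omega>)"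
    using sqi_mult_integrable[OF sD(1) sD(2)] sqi_mult_integrable[OF sD(1) sS] by simp
  also have "\<dots> = a * integral\<^sup>L (LT T) (\<lambda>y. indicator {s<..t} y * indicator {s'<..t'} y)
      + integral\<^sup>L (LT T) (\<lambda>y. indicator {s<..t} y * step_fun l y)"
    using Cons.hyps v assms by (simp add: cov_incr int_LT_ind)
  also have "\<dots> = integral\<^sup>L (LT T) (\<lambda>y. a * (indicator {s<..t} y * indicator {s'<..t'} y)
      + indicator {s<..t} y * step_fun l y)"
    using sqi_mult_integrable[OF sqi_LT_ind sqi_LT_ind, of T s t s' t']
      sqi_mult_integrable[OF sqi_LT_ind sqi_LT_step, of T s t l] by simp
  also have "\<dots> = integral\<^sup>L (LT T) (\<lambda>y. indicator {s<..t} y * step_fun (x # l) y)"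
    using x by (simp add: algebra_simps)
  finally show ?case .
qed

lemma iso:
  assumes "vl T l" "vl T l'"
  shows "integral\<^sup>L P (\<lambda>\<omega>. step_int B l \<omega> * step_int B l' \<omega>) =
    integral\<^sup>L (LT T) (\<lambda>x. step_fun l x * step_fun l' x)"
  using assms(1)
proof (induct l)
  case Nil
  then show ?case by simp
next
  case (Cons x l)
  obtain a s t where x: "x = (a, s, t)" by (cases x) auto
  have v: "0 \<le> s" "s \<le> t" "t \<le> T" "vl T l" using Cons.prems x by auto
  have sD: "sqi P (\<lambda>\<omega>. B t \<omega> - B s \<omega>)"
    using v by (auto intro!: sqiLC LC_diff LC_B)
  have sS: "sqi P (step_int B l)" "sqi P (step_int B l')" using v assms by (auto intro: sqiLC LC_step)
  have "integral\<^sup>L P (\<lambda>\<omega>. step_int B (x # l) \<omega> * step_int B l' \<omega>) =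
     integral\<^sup>L P (\<lambda>\<omega>. a * ((B t \<omega> - B s \<omega>) * step_int B l' \<omega>) + step_int B l \<omega> * step_int B l' \<omega>)"
    using x by (simp add: algebra_simps)
  also have "\<dots> = a * integral\<^sup>L P (\<lambda>\<omega>. (B t \<omega> - B s \<omega>) * step_int B l' \<omega>)
      + integral\<^sup>L P (\<lambda>\<omega>. step_int B l \<omega> * step_int B l' \<omega>)"
    using sqi_mult_integrable[OF sD sS(2)] sqi_mult_integrable[OF sS(1) sS(2)] by simp
  also have "\<dots> = a * integral\<^sup>L (LT T) (\<lambda>y. indicator {s<..t} y * step_fun l' y)
      + integral\<^sup>L (LT T) (\<lambda>y. step_fun l y * step_fun l' y)"
    using Cons.hyps v assms by (simp add: iso1)
  also have "\<dots> = integral\<^sup>L (LT T) (\<lambda>y. a * (indicator {s<..t} y * step_fun l' y)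
      + step_fun l y * step_fun l' y)"
    using sqi_mult_integrable[OF sqi_LT_ind sqi_LT_step, of T s t l']
      sqi_mult_integrable[OF sqi_LT_step sqi_LT_step, of T l l'] by simp
  also have "\<dots> = integral\<^sup>L (LT T) (\<lambda>y. step_fun (x # l) y * step_fun l' y)"
    using x by (simp add: algebra_simps)
  finally show ?case .
qed

lemma wiener_L2:
  assumes W: "wiener_integral P T B g Y" and g: "g \<in> borel_measurable borel"
  shows "\<exists>l. (\<forall>n. vl T (l n)) \<and> L2conv P (\<lambda>n. step_int B (l n)) Y \<and> L2conv (LT T) (\<lambda>n. step_fun (l n)) g"
proof -
  obtain l where l: "\<forall>n. \<forall>(a, s, t)\<in>set (l n). 0 \<le> s \<and> s \<le> t \<and> t \<le> T"
    and c1: "(\<lambda>n. \<integral>\<^sup>+ x. ennreal ((step_fun (l n) x - g x)\<^sup>2) * indicator {0..T} x \<partial>lborel) \<longlonglongrightarrow> 0"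
    and c2: "(\<lambda>n. \<integral>\<^sup>+ \<omega>. ennreal ((step_int B (l n) \<omega> - Y \<omega>)\<^sup>2) \<partial>P) \<longlonglongrightarrow> 0"
    and Ym: "Y \<in> borel_measurable P"
    using W unfolding wiener_integral_def by blast
  have v: "\<forall>n. vl T (l n)" using l by (simp add: vl_def)
  have L1: "L2conv P (\<lambda>n. step_int B (l n)) Y"
    by (rule L2conv_nn[OF _ Ym c2]) (use v in \<open>auto intro: sqiLC LC_step\<close>)
  have e: "(\<integral>\<^sup>+ x. ennreal ((step_fun (l n) x - g x)\<^sup>2) \<partial>LT T) =
      (\<integral>\<^sup>+ x. ennreal ((step_fun (l n) x - g x)\<^sup>2) * indicator {0..T} x \<partial>lborel)" for n
    unfolding LT_def by (rule nn_integral_restrict_space) simp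
  have L2: "L2conv (LT T) (\<lambda>n. step_fun (l n)) g"
    by (rule L2conv_nn[OF sqi_LT_step LT_meas[OF g]]) (use c1 e in simp)
  show ?thesis using v L1 L2 by blast
qed

lemma wiener_props:
  assumes W1: "wiener_integral P T B g1 Y1" and g1: "g1 \<in> borel_measurable borel"
    and W2: "wiener_integral P T B g2 Y2" and g2: "g2 \<in> borel_measurable borel"
  shows "integral\<^sup>L P (\<lambda>\<omega>. Y1 \<omega> * Y2 \<omega>) = integral\<^sup>L (LT T) (\<lambda>x. g1 x * g2 x)"
proof -
  obtain l1 where v1: "\<forall>n. vl T (l1 n)" and A1: "L2conv P (\<lambda>n. step_int B (l1 n)) Y1"
    and B1: "L2conv (LT T) (\<lambda>n. step_fun (l1 n)) g1"
    using wiener_L2[OF W1 g1] by blast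
  obtain l2 where v2: "\<forall>n. vl T (l2 n)" and A2: "L2conv P (\<lambda>n. step_int B (l2 n)) Y2"
    and B2: "L2conv (LT T) (\<lambda>n. step_fun (l2 n)) g2"
    using wiener_L2[OF W2 g2] by blast
  have "(\<lambda>n. integral\<^sup>L P (\<lambda>\<omega>. step_int B (l1 n) \<omega> * step_int B (l2 n) \<omega>)) \<longlonglongrightarrow> integral\<^sup>L P (\<lambda>\<omega>. Y1 \<omega> * Y2 \<omega>)"
    by (rule L2conv_prod[OF A1 A2])
  moreover have "(\<lambda>n. integral\<^sup>L P (\<lambda>\<omega>. step_int B (l1 n) \<omega> * step_int B (l2 n) \<omega>)) \<longlonglongrightarrow> integral\<^sup>L (LT T) (\<lambda>x. g1 x * g2 x)"
    using L2conv_prod[OF B1 B2] v1 v2 by (simp add: iso)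
  ultimately show ?thesis by (rule LIMSEQ_unique)
qed

lemma wiener_mean:
  assumes W: "wiener_integral P T B g Y" and g: "g \<in> borel_measurable borel"
  shows "integral\<^sup>L P Y = 0"
proof -
  interpret prob_space P by (rule P)
  obtain l where v: "\<forall>n. vl T (l n)" and A: "L2conv P (\<lambda>n. step_int B (l n)) Y"
    using wiener_L2[OF W g] by blast
  have one: "L2conv P (\<lambda>n x. 1) (\<lambda>x. 1)"
    by (rule L2conv_const, rule sqi_const) (simp add: finite_measure_axioms)
  have "(\<lambda>n. integral\<^sup>L P (\<lambda>\<omega>. step_int B (l n) \<omega> * 1)) \<longlonglongrightarrow> integral\<^sup>L P (\<lambda>\<omega>. Y \<omega> * 1)"
    by (rule L2conv_prod[OF A one])
  moreover have "\<And>n. integral\<^sup>L P (\<lambda>\<omega>. step_int B (l n) \<omega> * 1) = 0"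
    using LC_mean[OF P C LC_step] v by simp
  ultimately show ?thesis using LIMSEQ_unique[of "\<lambda>n. 0" 0] by simp
qed

end

lemma nn_FTC:
  fixes F f :: "real \<Rightarrow> real"
  assumes ab: "a < b" and Fc: "continuous_on {a..b} F"
    and D: "\<And>x. a<x \<Longrightarrow> x<b \<Longrightarrow> DERIV F x :> f x"
    and fc: "\<And>x. a<x \<Longrightarrow> x<b \<Longrightarrow> isCont f x"
    and nn: "\<And>x. a<x \<Longrightarrow> x<b \<Longrightarrow> 0 \<le> f x"
  shows "(\<integral>\<^sup>+x. ennreal (f x) * indicator {a<..<b} x \<partial>lborel) = ennreal (F b - F a)"
    "F a \<le> F b"
proof -
  have lA: "((F \<circ> real_of_ereal) \<longlongrightarrow> F a) (at_right (ereal a))"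
    unfolding ereal_tendsto_simps1
    using Fc ab by (metis atLeastAtMost_iff continuous_on_Icc_at_rightD)
  have lB: "((F \<circ> real_of_ereal) \<longlongrightarrow> F b) (at_left (ereal b))"
    unfolding ereal_tendsto_simps1
    using Fc ab by (metis atLeastAtMost_iff continuous_on_Icc_at_leftD)
  note R = interval_integral_FTC_nonneg[of "ereal a" "ereal b" F f, OF _ _ _ _ lA lB]
  have si: "set_integrable lborel {a<..<b} f" and v: "(LBINT x=ereal a..ereal b. f x) = F b - F a"
    using R ab D fc nn by auto
  have vv: "(LBINT x. indicator {a<..<b} x * f x) = F b - F a"
    using v ab unfolding interval_lebesgue_integral_def set_lebesgue_integral_def by simp
  have "(\<integral>\<^sup>+x. ennreal (f x) * indicator {a<..<b} x \<partial>lborel) = (\<integral>\<^sup>+x. ennreal (indicator {a<..<b} x * f x) \<partial>lborel)"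
    by (rule nn_integral_cong) (simp split: split_indicator)
  also have "\<dots> = ennreal (LBINT x. indicator {a<..<b} x * f x)"
    apply (rule nn_integral_eq_integral)
    using si unfolding set_integrable_def apply simp
    using nn by (auto split: split_indicator)
  finally show "(\<integral>\<^sup>+x. ennreal (f x) * indicator {a<..<b} x \<partial>lborel) = ennreal (F b - F a)"
    using vv by simp
  have "0 \<le> (LBINT x. indicator {a<..<b} x * f x)"
    by (rule integral_nonneg_AE) (use nn in \<open>auto split: split_indicator\<close>)
  then show "F a \<le> F b" using vv by simp
qed

lemma nn_to_int:
  fixes f :: "real \<Rightarrow> real"
  assumes fm: "f \<in> borel_measurable borel" and S: "S \<in> sets borel"
    and nn: "\<And>x. x \<in> S \<Longrightarrow> 0 \<le> f x"
    and e: "(\<integral>\<^sup>+x. ennreal (f x) * indicator S x \<partial>lborel) = ennreal v" and v: "0 \<le> v"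
  shows "integral\<^sup>L lborel (\<lambda>x. indicator S x * f x) = v"
proof -
  have "integral\<^sup>L lborel (\<lambda>x. indicator S x * f x) = enn2real (\<integral>\<^sup>+x. ennreal (indicator S x * f x) \<partial>lborel)"
    by (rule integral_eq_nn_integral) (use fm S nn in \<open>auto split: split_indicator\<close>)
  also have "(\<integral>\<^sup>+x. ennreal (indicator S x * f x) \<partial>lborel) = (\<integral>\<^sup>+x. ennreal (f x) * indicator S x \<partial>lborel)"
    by (rule nn_integral_cong) (simp split: split_indicator)
  finally show ?thesis using e v by simp
qed

lemma powr_cont0:
  fixes f :: "real \<Rightarrow> real"
  assumes "p > 0" "continuous_on S f" "\<And>x. x \<in> S \<Longrightarrow> 0 \<le> f x"
  shows "continuous_on S (\<lambda>x. f x powr p)"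
  using assms by (intro continuous_on_powr') (auto intro: continuous_intros)

lemma deriv_powr_id: "0 < (x::real) \<Longrightarrow> DERIV (\<lambda>x. x powr p) x :> p * x powr (p - 1)"
  using has_real_derivative_powr by blast

lemma deriv_powr_shift: assumes "0 < T - (x::real)" shows "DERIV (\<lambda>x. (T - x) powr p) x :> - (p * (T - x) powr (p - 1))"
proof -
  have "((\<lambda>x. T - x) has_real_derivative -1) (at x)" by (auto intro!: derivative_eq_intros)
  from DERIV_fun_powr[OF this assms, of p] show ?thesis by simp
qed

lemma deriv_powr_shift2: assumes "0 < (x::real) - a" shows "DERIV (\<lambda>x. (x - a) powr p) x :> p * (x - a) powr (p - 1)"
proof -
  have "((\<lambda>x. x - a) has_real_derivative 1) (at x)" by (auto intro!: derivative_eq_intros)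
  from DERIV_fun_powr[OF this assms, of p] show ?thesis by simp
qed

lemma nnY:
  fixes \<beta> T m :: real
  assumes b: "0 < \<beta>" "\<beta> < 1" and m: "0 < m" "m \<le> T"
  shows "(\<integral>\<^sup>+x. ennreal (x powr (-\<beta>) + (T - x) powr (-\<beta>)) * indicator {0<..<m} x \<partial>lborel)
     = ennreal ((m powr (1-\<beta>) + T powr (1-\<beta>) - (T-m) powr (1-\<beta>)) / (1-\<beta>))"
    "0 \<le> (m powr (1-\<beta>) + T powr (1-\<beta>) - (T-m) powr (1-\<beta>)) / (1-\<beta>)"
proof -
  define F where "F x = (x powr (1-\<beta>) - (T - x) powr (1-\<beta>)) / (1-\<beta>)" for x
  have Fc: "continuous_on {0..m} F"
    unfolding F_def using b m
    by (intro continuous_intros powr_cont0) auto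
  have D: "DERIV F x :> x powr (-\<beta>) + (T - x) powr (-\<beta>)" if "0 < x" "x < m" for x
  proof -
    have "DERIV F x :> ((1-\<beta>) * x powr ((1-\<beta>) - 1) - - ((1-\<beta>) * (T - x) powr ((1-\<beta>) - 1))) / (1-\<beta>)"
      unfolding F_def using that m
      by (intro DERIV_cdivide DERIV_diff deriv_powr_id deriv_powr_shift) auto
    moreover have "((1-\<beta>) * x powr ((1-\<beta>) - 1) - - ((1-\<beta>) * (T - x) powr ((1-\<beta>) - 1))) / (1-\<beta>)
        = x powr (-\<beta>) + (T - x) powr (-\<beta>)"
    proof -
      have nz: "1 - \<beta> \<noteq> 0" using b by simp
      show ?thesis using nz by (simp add: field_simps)
    qed
    ultimately show ?thesis by simp
  qed
  have fc: "isCont (\<lambda>x. x powr (-\<beta>) + (T - x) powr (-\<beta>)) x" if "0 < x" "x < m" for x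
    using that m by (intro continuous_intros) auto
  note R = nn_FTC[of 0 m F, OF m(1) Fc D fc]
  have e: "F m - F 0 = (m powr (1-\<beta>) + T powr (1-\<beta>) - (T-m) powr (1-\<beta>)) / (1-\<beta>)"
    unfolding F_def by (simp only: diff_divide_distrib[symmetric]) (simp add: algebra_simps)
  show "(\<integral>\<^sup>+x. ennreal (x powr (-\<beta>) + (T - x) powr (-\<beta>)) * indicator {0<..<m} x \<partial>lborel)
     = ennreal ((m powr (1-\<beta>) + T powr (1-\<beta>) - (T-m) powr (1-\<beta>)) / (1-\<beta>))"
    using R(1) e by simp
  show "0 \<le> (m powr (1-\<beta>) + T powr (1-\<beta>) - (T-m) powr (1-\<beta>)) / (1-\<beta>)"
    using R(2) e by simp
qed

lemma int_Y:
  fixes \<beta> T m :: real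
  assumes b: "0 < \<beta>" "\<beta> < 1" and m: "0 \<le> m" "m \<le> T"
  shows "integral\<^sup>L lborel (\<lambda>x. indicator {0..m} x * (x powr (-\<beta>) + (T - x) powr (-\<beta>)))
     = (m powr (1-\<beta>) + T powr (1-\<beta>) - (T-m) powr (1-\<beta>)) / (1-\<beta>)"
proof (cases "m = 0")
  case True
  have "integral\<^sup>L lborel (\<lambda>x. indicator {0..m} x * (x powr (-\<beta>) + (T - x) powr (-\<beta>))) = integral\<^sup>L lborel (\<lambda>x. 0::real)"
  proof -
    have AE: "AE x in lborel. indicator {0..m} x * (x powr (-\<beta>) + (T - x) powr (-\<beta>)) = (0::real)"
      using AE_lborel_singleton[of 0] by eventually_elim (use True in \<open>auto split: split_indicator\<close>)
    show ?thesis by (subst integral_cong_AE[where g="\<lambda>x. 0"]) (use AE in auto)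
  qed
  then show ?thesis using True by simp
next
  case False
  then have m0: "0 < m" using m by simp
  have "integral\<^sup>L lborel (\<lambda>x. indicator {0..m} x * (x powr (-\<beta>) + (T - x) powr (-\<beta>))) =
      integral\<^sup>L lborel (\<lambda>x. indicator {0<..<m} x * (x powr (-\<beta>) + (T - x) powr (-\<beta>)))"
    by (rule integral_cong_AE)
       (use AE_lborel_singleton[of 0] AE_lborel_singleton[of m] in \<open>auto split: split_indicator\<close>)
  also have "\<dots> = (m powr (1-\<beta>) + T powr (1-\<beta>) - (T-m) powr (1-\<beta>)) / (1-\<beta>)"
    by (rule nn_to_int[OF _ _ _ nnY(1)[OF b m0 m(2)] nnY(2)[OF b m0 m(2)]]) auto
  finally show ?thesis .
qed

lemma inner_b:
  fixes \<beta> T t a :: real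
  assumes b: "0 < \<beta>" "\<beta> < 1" and at: "a < t" "t \<le> T"
  shows "(\<integral>\<^sup>+x. ennreal (if t \<le> x \<and> x < T then 2 powr \<beta> * (x - a) powr (-\<beta>-1) else 0) \<partial>lborel)
     = ennreal ((2 powr \<beta> / \<beta>) * ((t - a) powr (-\<beta>) - (T - a) powr (-\<beta>)))"
proof (cases "t = T")
  case True
  have "(\<lambda>x. ennreal (if t \<le> x \<and> x < T then 2 powr \<beta> * (x - a) powr (-\<beta>-1) else 0)) = (\<lambda>x. 0)"
    using True by (intro ext) auto
  then show ?thesis using True by simp
next
  case False
  then have tT: "t < T" using at by simp
  define G where "G x = - (2 powr \<beta> / \<beta>) * (x - a) powr (-\<beta>)" for x
  have Gc: "continuous_on {t..T} G"
    unfolding G_def using at by (intro continuous_intros) auto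
  have D: "DERIV G x :> 2 powr \<beta> * (x - a) powr (-\<beta>-1)" if "t < x" "x < T" for x
  proof -
    have "DERIV G x :> - (2 powr \<beta> / \<beta>) * ((-\<beta>) * (x - a) powr ((-\<beta>) - 1))"
      unfolding G_def using that at
      by (intro DERIV_cmult deriv_powr_shift2) auto
    moreover have "- (2 powr \<beta> / \<beta>) * ((-\<beta>) * (x - a) powr ((-\<beta>) - 1)) = 2 powr \<beta> * (x - a) powr (-\<beta>-1)"
      using b by simp
    ultimately show ?thesis by simp
  qed
  have fc: "isCont (\<lambda>x. 2 powr \<beta> * (x - a) powr (-\<beta>-1)) x" if "t < x" "x < T" for x
    using that at by (intro continuous_intros) auto
  note R = nn_FTC[of t T G, OF tT Gc D fc]
  have "(\<integral>\<^sup>+x. ennreal (if t \<le> x \<and> x < T then 2 powr \<beta> * (x - a) powr (-\<beta>-1) else 0) \<partial>lborel)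
      = (\<integral>\<^sup>+x. ennreal (2 powr \<beta> * (x - a) powr (-\<beta>-1)) * indicator {t<..<T} x \<partial>lborel)"
    by (rule nn_integral_cong_AE) (use AE_lborel_singleton[of t] in \<open>auto split: split_indicator\<close>)
  also have "\<dots> = ennreal (G T - G t)" by (rule R(1)) auto
  also have "G T - G t = (2 powr \<beta> / \<beta>) * ((t - a) powr (-\<beta>) - (T - a) powr (-\<beta>))"
    unfolding G_def by (simp add: algebra_simps)
  finally show ?thesis .
qed

lemma outer_a:
  fixes \<beta> T t s :: real
  assumes b: "0 < \<beta>" "\<beta> < 1" and st: "0 < s" "s \<le> t" "t \<le> T"
  shows "(\<integral>\<^sup>+a. ennreal ((2 powr \<beta> / \<beta>) * ((t - a) powr (-\<beta>) - (T - a) powr (-\<beta>))) * indicator {0<..<s} a \<partial>lborel)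
     = ennreal ((2 powr \<beta> / (\<beta> * (1 - \<beta>))) * (t powr (1-\<beta>) - (t-s) powr (1-\<beta>) - T powr (1-\<beta>) + (T-s) powr (1-\<beta>)))"
    "0 \<le> (2 powr \<beta> / (\<beta> * (1 - \<beta>))) * (t powr (1-\<beta>) - (t-s) powr (1-\<beta>) - T powr (1-\<beta>) + (T-s) powr (1-\<beta>))"
proof -
  define K where "K = 2 powr \<beta> / (\<beta> * (1 - \<beta>))"
  define H where "H a = K * ((T - a) powr (1-\<beta>) - (t - a) powr (1-\<beta>))" for a
  have Hc: "continuous_on {0..s} H"
    unfolding H_def using b st by (intro continuous_intros powr_cont0) auto
  have D: "DERIV H a :> (2 powr \<beta> / \<beta>) * ((t - a) powr (-\<beta>) - (T - a) powr (-\<beta>))" if "0 < a" "a < s" for a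
  proof -
    have "DERIV H a :> K * (- ((1-\<beta>) * (T - a) powr ((1-\<beta>) - 1)) - - ((1-\<beta>) * (t - a) powr ((1-\<beta>) - 1)))"
      unfolding H_def using that st
      by (intro DERIV_cmult DERIV_diff deriv_powr_shift) auto
    moreover have "K * (- ((1-\<beta>) * (T - a) powr ((1-\<beta>) - 1)) - - ((1-\<beta>) * (t - a) powr ((1-\<beta>) - 1)))
       = (2 powr \<beta> / \<beta>) * ((t - a) powr (-\<beta>) - (T - a) powr (-\<beta>))"
    proof -
      have nz: "1 - \<beta> \<noteq> 0" "\<beta> \<noteq> 0" using b by auto
      show ?thesis unfolding K_def using nz by (simp add: field_simps)
    qed
    ultimately show ?thesis by simp
  qed
  have fc: "isCont (\<lambda>a. (2 powr \<beta> / \<beta>) * ((t - a) powr (-\<beta>) - (T - a) powr (-\<beta>))) a" if "0 < a" "a < s" for a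
    using that st by (intro continuous_intros) auto
  have nn: "0 \<le> (2 powr \<beta> / \<beta>) * ((t - a) powr (-\<beta>) - (T - a) powr (-\<beta>))" if "0 < a" "a < s" for a
  proof -
    have "(T - a) powr (-\<beta>) \<le> (t - a) powr (-\<beta>)"
      by (rule powr_mono2') (use that st b in auto)
    then show ?thesis using b by simp
  qed
  note R = nn_FTC[of 0 s H, OF st(1) Hc D fc nn]
  have e: "H s - H 0 = K * (t powr (1-\<beta>) - (t-s) powr (1-\<beta>) - T powr (1-\<beta>) + (T-s) powr (1-\<beta>))"
    unfolding H_def by (simp add: algebra_simps)
  show "(\<integral>\<^sup>+a. ennreal ((2 powr \<beta> / \<beta>) * ((t - a) powr (-\<beta>) - (T - a) powr (-\<beta>))) * indicator {0<..<s} a \<partial>lborel)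
     = ennreal ((2 powr \<beta> / (\<beta> * (1 - \<beta>))) * (t powr (1-\<beta>) - (t-s) powr (1-\<beta>) - T powr (1-\<beta>) + (T-s) powr (1-\<beta>)))"
    using R(1) e unfolding K_def by simp
  show "0 \<le> (2 powr \<beta> / (\<beta> * (1 - \<beta>))) * (t powr (1-\<beta>) - (t-s) powr (1-\<beta>) - T powr (1-\<beta>) + (T-s) powr (1-\<beta>))"
    using R(2) e unfolding K_def by simp
qed

lemma half_pow:
  fixes \<beta> d :: real assumes "0 < d"
  shows "1/2 * (d / 2) powr (-\<beta>-1) = 2 powr \<beta> * d powr (-\<beta>-1)"
proof -
  have "(d / 2) powr (-\<beta>-1) = d powr (-\<beta>-1) / 2 powr (-\<beta>-1)"
    using assms by (simp add: powr_divide)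
  moreover have "2 powr (-\<beta>-1) = inverse (2 powr \<beta> * 2)"
  proof -
    have "2 powr (-\<beta>-1) = 2 powr (-(\<beta>+1))" by simp
    also have "\<dots> = inverse (2 powr (\<beta> + 1))" by (rule powr_minus)
    also have "2 powr (\<beta> + 1) = 2 powr \<beta> * 2" by (simp add: powr_add)
    finally show ?thesis .
  qed
  ultimately show ?thesis by (simp add: field_simps)
qed

lemma nu_AB:
  fixes \<beta> T s t :: real
  assumes b: "0 < \<beta>" "\<beta> < 1" and st: "0 \<le> s" "s \<le> t" "t \<le> T"
  shows "emeasure (control_measure \<beta> T) ({(x, u). \<bar>s - x\<bar> \<le> u} \<inter> {(x, u). \<bar>t - x\<bar> \<le> u}) =
    ennreal ((2 powr \<beta> / (\<beta> * (1 - \<beta>))) * (t powr (1-\<beta>) - (t-s) powr (1-\<beta>) - T powr (1-\<beta>) + (T-s) powr (1-\<beta>)))"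
proof -
  define A where "A = {(x, u). \<bar>s - x\<bar> \<le> u} \<inter> {(x::real, u::real). \<bar>t - x\<bar> \<le> u}"
  define \<phi> where "\<phi> = (\<lambda>(x::real, u::real). ennreal (if 0 < u \<and> 0 < x - u \<and> x + u < T then u powr (-\<beta> - 1) else 0))"
  define \<psi> where "\<psi> = (\<lambda>(x::real, u::real). ennreal (if 0 < u \<and> 0 < x - u \<and> x + u < T \<and> \<bar>s - x\<bar> \<le> u \<and> \<bar>t - x\<bar> \<le> u
     then u powr (-\<beta> - 1) else 0))"
  have Am: "A \<in> sets borel"
  proof -
    have "A = {z. \<bar>s - fst z\<bar> \<le> snd z} \<inter> {z. \<bar>t - fst z\<bar> \<le> snd z}" unfolding A_def by auto
    moreover have "closed ({z::real\<times>real. \<bar>s - fst z\<bar> \<le> snd z} \<inter> {z. \<bar>t - fst z\<bar> \<le> snd z})"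
      by (intro closed_Int closed_Collect_le continuous_intros)
    ultimately show ?thesis by (simp add: borel_closed)
  qed
  have "\<phi> \<in> borel_measurable (lborel \<Otimes>\<^sub>M lborel)" unfolding \<phi>_def by measurable
  then have \<phi>m: "\<phi> \<in> borel_measurable lborel" by (simp add: lborel_prod)
  have \<psi>x: "(\<lambda>x. \<psi> (x, u)) \<in> borel_measurable borel" for u
    unfolding \<psi>_def case_prod_conv by measurable
  have \<psi>u: "(\<lambda>u. \<psi> (u + a, u)) \<in> borel_measurable borel" for a
    unfolding \<psi>_def case_prod_conv by measurable
  have \<psi>b: "(\<lambda>b. \<psi> ((-a/2 + 1/2 * b) + a, -a/2 + 1/2 * b)) \<in> borel_measurable borel" for a
    unfolding \<psi>_def case_prod_conv by measurable
  have \<psi>m2: "\<psi> \<in> borel_measurable (lborel \<Otimes>\<^sub>M lborel)" unfolding \<psi>_def by measurable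
  have "emeasure (control_measure \<beta> T) A = (\<integral>\<^sup>+z. \<phi> z * indicator A z \<partial>lborel)"
    unfolding control_measure_def \<phi>_def[symmetric] by (rule emeasure_density) (use \<phi>m Am in auto)
  also have "\<dots> = (\<integral>\<^sup>+z. \<psi> z \<partial>lborel)"
    by (rule nn_integral_cong) (auto simp: \<phi>_def \<psi>_def A_def split: split_indicator)
  also have "\<dots> = (\<integral>\<^sup>+z. \<psi> z \<partial>(lborel \<Otimes>\<^sub>M lborel))"
    by (simp add: lborel_prod)
  also have "\<dots> = (\<integral>\<^sup>+u. (\<integral>\<^sup>+x. \<psi> (x, u) \<partial>lborel) \<partial>lborel)"
    by (rule lborel_pair.nn_integral_snd[symmetric, OF \<psi>m2])
  also have "\<dots> = (\<integral>\<^sup>+u. (\<integral>\<^sup>+a. \<psi> (u + a, u) \<partial>lborel) \<partial>lborel)"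
  proof (rule nn_integral_cong)
    fix u :: real
    show "(\<integral>\<^sup>+x. \<psi> (x, u) \<partial>lborel) = (\<integral>\<^sup>+a. \<psi> (u + a, u) \<partial>lborel)"
      using nn_integral_real_affine[of "\<lambda>x. \<psi> (x, u)" 1 u] \<psi>x by simp
  qed
  also have "\<dots> = (\<integral>\<^sup>+a. (\<integral>\<^sup>+u. \<psi> (u + a, u) \<partial>lborel) \<partial>lborel)"
  proof (rule lborel_pair.Fubini')
    show "(\<lambda>(a, u). \<psi> (u + a, u)) \<in> borel_measurable (lborel \<Otimes>\<^sub>M lborel)"
      unfolding \<psi>_def by measurable
  qed
  also have "\<dots> = (\<integral>\<^sup>+a. (\<integral>\<^sup>+b. ennreal (if 0 < a \<and> a \<le> s \<and> t \<le> b \<and> b < T \<and> a < b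
        then 2 powr \<beta> * (b - a) powr (-\<beta>-1) else 0) \<partial>lborel) \<partial>lborel)"
  proof (rule nn_integral_cong)
    fix a :: real
    have "(\<integral>\<^sup>+u. \<psi> (u + a, u) \<partial>lborel) = ennreal \<bar>1/2\<bar> * (\<integral>\<^sup>+b. \<psi> ((-a/2 + 1/2 * b) + a, -a/2 + 1/2 * b) \<partial>lborel)"
      using nn_integral_real_affine[of "\<lambda>u. \<psi> (u + a, u)" "1/2" "-a/2"] \<psi>u by simp
    also have "\<dots> = (\<integral>\<^sup>+b. ennreal (1/2) * \<psi> ((-a/2 + 1/2 * b) + a, -a/2 + 1/2 * b) \<partial>lborel)"
      using nn_integral_cmult[of "\<lambda>b. \<psi> ((-a/2 + 1/2 * b) + a, -a/2 + 1/2 * b)" lborel "ennreal (1/2)"] \<psi>b[of a]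
      by simp
    also have "\<dots> = (\<integral>\<^sup>+b. ennreal (if 0 < a \<and> a \<le> s \<and> t \<le> b \<and> b < T \<and> a < b
        then 2 powr \<beta> * (b - a) powr (-\<beta>-1) else 0) \<partial>lborel)"
    proof (rule nn_integral_cong)
      fix b :: real
      have u: "-a/2 + 1/2 * b = (b - a) / 2" by simp
      have x: "(-a/2 + 1/2 * b) + a = (a + b) / 2" by simp
      have c: "(0 < (b - a) / 2 \<and> 0 < (a + b) / 2 - (b - a) / 2 \<and> (a + b) / 2 + (b - a) / 2 < T \<and>
          \<bar>s - (a + b) / 2\<bar> \<le> (b - a) / 2 \<and> \<bar>t - (a + b) / 2\<bar> \<le> (b - a) / 2) \<longleftrightarrow>
          (0 < a \<and> a \<le> s \<and> t \<le> b \<and> b < T \<and> a < b)"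
      proof -
        have e1: "(0 < (b - a) / 2) = (a < b)" "(0 < (a + b) / 2 - (b - a) / 2) = (0 < a)"
          "((a + b) / 2 + (b - a) / 2 < T) = (b < T)"
          "(\<bar>s - (a + b) / 2\<bar> \<le> (b - a) / 2) = (a \<le> s \<and> s \<le> b)"
          "(\<bar>t - (a + b) / 2\<bar> \<le> (b - a) / 2) = (a \<le> t \<and> t \<le> b)"
          by (simp_all only: abs_le_iff) (auto simp: field_simps)
        show ?thesis unfolding e1 using st by auto
      qed
      show "ennreal (1/2) * \<psi> ((-a/2 + 1/2 * b) + a, -a/2 + 1/2 * b) = ennreal (if 0 < a \<and> a \<le> s \<and> t \<le> b \<and> b < T \<and> a < b
        then 2 powr \<beta> * (b - a) powr (-\<beta>-1) else 0)"
      proof (cases "0 < a \<and> a \<le> s \<and> t \<le> b \<and> b < T \<and> a < b")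
        case True
        then have ba: "0 < b - a" by simp
        have cc: "0 < (b - a) / 2 \<and> 0 < (a + b) / 2 - (b - a) / 2 \<and> (a + b) / 2 + (b - a) / 2 < T \<and>
          \<bar>s - (a + b) / 2\<bar> \<le> (b - a) / 2 \<and> \<bar>t - (a + b) / 2\<bar> \<le> (b - a) / 2"
          using c True by blast
        have pv: "\<psi> ((a + b) / 2, (b - a) / 2) = ennreal (((b - a) / 2) powr (-\<beta>-1))"
          unfolding \<psi>_def case_prod_conv using cc by (simp only: if_True simp_thms)
        have "ennreal (1/2) * ennreal (((b - a) / 2) powr (-\<beta>-1)) = ennreal (1/2 * ((b - a) / 2) powr (-\<beta>-1))"
          by (rule ennreal_mult[symmetric]) auto
        also have "\<dots> = ennreal (2 powr \<beta> * (b - a) powr (-\<beta>-1))" using half_pow[OF ba] by simp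
        moreover have x': "(b - a) / 2 + a = (a + b) / 2" by (simp add: field_simps)
        ultimately show ?thesis unfolding u x' pv using True by simp
      next
        case False
        have cc: "\<not> (0 < (b - a) / 2 \<and> 0 < (a + b) / 2 - (b - a) / 2 \<and> (a + b) / 2 + (b - a) / 2 < T \<and>
          \<bar>s - (a + b) / 2\<bar> \<le> (b - a) / 2 \<and> \<bar>t - (a + b) / 2\<bar> \<le> (b - a) / 2)"
          using c False by blast
        have pv: "\<psi> ((a + b) / 2, (b - a) / 2) = 0"
          unfolding \<psi>_def case_prod_conv using cc by (simp only: if_False simp_thms ennreal_0)
        have x': "(b - a) / 2 + a = (a + b) / 2" by (simp add: field_simps)
        show ?thesis unfolding u x' pv using False by simp
      qed
    qed
    finally show "(\<integral>\<^sup>+u. \<psi> (u + a, u) \<partial>lborel) = (\<integral>\<^sup>+b. ennreal (if 0 < a \<and> a \<le> s \<and> t \<le> b \<and> b < T \<and> a < b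
        then 2 powr \<beta> * (b - a) powr (-\<beta>-1) else 0) \<partial>lborel)" .
  qed
  also have "\<dots> = ennreal ((2 powr \<beta> / (\<beta> * (1 - \<beta>))) * (t powr (1-\<beta>) - (t-s) powr (1-\<beta>) - T powr (1-\<beta>) + (T-s) powr (1-\<beta>)))"
  proof (cases "s = 0")
    case True
    then have "(\<lambda>a. (\<integral>\<^sup>+b. ennreal (if 0 < a \<and> a \<le> s \<and> t \<le> b \<and> b < T \<and> a < b
        then 2 powr \<beta> * (b - a) powr (-\<beta>-1) else 0) \<partial>lborel)) = (\<lambda>a. 0)"
    proof (intro ext)
      fix a :: real
      have "(\<lambda>b. ennreal (if 0 < a \<and> a \<le> s \<and> t \<le> b \<and> b < T \<and> a < b
        then 2 powr \<beta> * (b - a) powr (-\<beta>-1) else 0)) = (\<lambda>b. 0)"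
        using True by (intro ext) auto
      then show "(\<integral>\<^sup>+b. ennreal (if 0 < a \<and> a \<le> s \<and> t \<le> b \<and> b < T \<and> a < b
        then 2 powr \<beta> * (b - a) powr (-\<beta>-1) else 0) \<partial>lborel) = 0" by simp
    qed
    then show ?thesis using True by simp
  next
    case False
    then have s0: "0 < s" using st by simp
    have "(\<integral>\<^sup>+a. (\<integral>\<^sup>+b. ennreal (if 0 < a \<and> a \<le> s \<and> t \<le> b \<and> b < T \<and> a < b
        then 2 powr \<beta> * (b - a) powr (-\<beta>-1) else 0) \<partial>lborel) \<partial>lborel) =
      (\<integral>\<^sup>+a. ennreal ((2 powr \<beta> / \<beta>) * ((t - a) powr (-\<beta>) - (T - a) powr (-\<beta>))) * indicator {0<..<s} a \<partial>lborel)"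
    proof (rule nn_integral_cong_AE)
      show "AE a in lborel. (\<integral>\<^sup>+b. ennreal (if 0 < a \<and> a \<le> s \<and> t \<le> b \<and> b < T \<and> a < b
        then 2 powr \<beta> * (b - a) powr (-\<beta>-1) else 0) \<partial>lborel) =
        ennreal ((2 powr \<beta> / \<beta>) * ((t - a) powr (-\<beta>) - (T - a) powr (-\<beta>))) * indicator {0<..<s} a"
        using AE_lborel_singleton[of s]
      proof eventually_elim
        fix a :: real assume "a \<noteq> s"
        show "(\<integral>\<^sup>+b. ennreal (if 0 < a \<and> a \<le> s \<and> t \<le> b \<and> b < T \<and> a < b
          then 2 powr \<beta> * (b - a) powr (-\<beta>-1) else 0) \<partial>lborel) =
          ennreal ((2 powr \<beta> / \<beta>) * ((t - a) powr (-\<beta>) - (T - a) powr (-\<beta>))) * indicator {0<..<s} a"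
        proof (cases "0 < a \<and> a < s")
          case True
          then have "(\<lambda>b. ennreal (if 0 < a \<and> a \<le> s \<and> t \<le> b \<and> b < T \<and> a < b
            then 2 powr \<beta> * (b - a) powr (-\<beta>-1) else 0)) =
            (\<lambda>b. ennreal (if t \<le> b \<and> b < T then 2 powr \<beta> * (b - a) powr (-\<beta>-1) else 0))"
            using st by (intro ext) auto
          moreover have "a < t" using True st by simp
          ultimately show ?thesis using inner_b[OF b _ st(3), of a] True by simp
        next
          case False
          then have "(\<lambda>b. ennreal (if 0 < a \<and> a \<le> s \<and> t \<le> b \<and> b < T \<and> a < b
            then 2 powr \<beta> * (b - a) powr (-\<beta>-1) else 0)) = (\<lambda>b. 0)"
            using \<open>a \<noteq> s\<close> by (intro ext) auto
          then show ?thesis using False by simp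
        qed
      qed
    qed
    also have "\<dots> = ennreal ((2 powr \<beta> / (\<beta> * (1 - \<beta>))) * (t powr (1-\<beta>) - (t-s) powr (1-\<beta>) - T powr (1-\<beta>) + (T-s) powr (1-\<beta>)))"
      by (rule outer_a(1)[OF b s0 st(2,3)])
    finally show ?thesis .
  qed
  finally show ?thesis unfolding A_def .
qed

lemma sqi_integrable: "prob_space P \<Longrightarrow> sqi P X \<Longrightarrow> integrable P X"
  using sqi_mult_integrable[of P X "\<lambda>_. 1"] sqi_const[of P 1] prob_space.finite_measure by fastforce

definition Aset :: "real \<Rightarrow> (real \<times> real) set" where
  "Aset t = {(x, u). \<bar>t - x\<bar> \<le> u}"

lemma Aset_inj: "inj_on Aset S"
proof (rule inj_onI)
  fix s t assume "Aset s = Aset t"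
  moreover have "(s, 0) \<in> Aset s" by (simp add: Aset_def)
  ultimately have "(s, 0) \<in> Aset t" by simp
  then have "\<bar>t - s\<bar> \<le> 0" by (simp add: Aset_def)
  then show "s = t" by simp
qed

lemma Aset_sets: "Aset t \<in> sets (control_measure \<beta> T)"
proof -
  have "Aset t = {z. \<bar>t - fst z\<bar> \<le> snd z}" by (auto simp: Aset_def)
  moreover have "closed {z::real\<times>real. \<bar>t - fst z\<bar> \<le> snd z}"
    by (intro closed_Collect_le continuous_intros)
  ultimately show ?thesis by (simp add: control_measure_def borel_closed)
qed

definition Vf :: "real \<Rightarrow> real \<Rightarrow> real \<Rightarrow> real \<Rightarrow> real" where
  "Vf \<beta> T s t = (2 powr \<beta> / (\<beta> * (1 - \<beta>))) * (t powr (1-\<beta>) - (t-s) powr (1-\<beta>) - T powr (1-\<beta>) + (T-s) powr (1-\<beta>))"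

lemma Vf_nonneg:
  assumes b: "0 < \<beta>" "\<beta> < 1" and st: "0 \<le> s" "s \<le> t" "t \<le> T"
  shows "0 \<le> Vf \<beta> T s t"
proof (cases "s = 0")
  case True then show ?thesis by (simp add: Vf_def)
next
  case False then show ?thesis using outer_a(2)[OF b _ st(2,3)] st unfolding Vf_def by simp
qed

lemma nu_measure:
  assumes b: "0 < \<beta>" "\<beta> < 1" and st: "0 \<le> s" "s \<le> t" "t \<le> T"
  shows "emeasure (control_measure \<beta> T) (Aset s \<inter> Aset t) = ennreal (Vf \<beta> T s t)"
    "measure (control_measure \<beta> T) (Aset s \<inter> Aset t) = Vf \<beta> T s t"
proof -
  show e: "emeasure (control_measure \<beta> T) (Aset s \<inter> Aset t) = ennreal (Vf \<beta> T s t)"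
    using nu_AB[OF b st] unfolding Aset_def Vf_def .
  show "measure (control_measure \<beta> T) (Aset s \<inter> Aset t) = Vf \<beta> T s t"
    unfolding measure_def e using Vf_nonneg[OF b st] by simp
qed

lemma white_noise_family:
  assumes P: "prob_space P" and b: "0 < \<beta>" "\<beta> < 1" and T: "0 < T"
    and WN: "gaussian_white_noise P (control_measure \<beta> T) M"
    and Wd: "\<And>t. t \<in> {0..T} \<Longrightarrow> W t = M (Aset t)"
  shows "centered_gaussian_family P {0..T} W (\<lambda>s t. measure (control_measure \<beta> T) (Aset s \<inter> Aset t))"
proof -
  let ?\<nu> = "control_measure \<beta> T"
  let ?I = "{A \<in> sets ?\<nu>. emeasure ?\<nu> A < \<infinity>}"
  have C: "centered_gaussian_family P ?I M (\<lambda>A B. measure ?\<nu> (A \<inter> B))"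
    using WN by (simp add: gaussian_white_noise_def)
  have AI: "Aset t \<in> ?I" if "t \<in> {0..T}" for t
  proof -
    have "emeasure ?\<nu> (Aset t) = ennreal (Vf \<beta> T t t)"
      using nu_measure(1)[OF b, of t t] that by simp
    then show ?thesis using Aset_sets by simp
  qed
  have JG: "jointly_gaussian P {0..T} W"
    unfolding jointly_gaussian_def
  proof (intro allI impI)
    fix J :: "real set" and a :: "real \<Rightarrow> real"
    assume J: "J \<subseteq> {0..T}" "finite J"
    define a' where "a' S = a (the_inv_into J Aset S)" for S
    have sub: "Aset ` J \<subseteq> ?I" using J AI by auto
    have g: "gaussian_rv P (\<lambda>\<omega>. \<Sum>S\<in>Aset ` J. a' S * M S \<omega>)"
      using C[unfolded centered_gaussian_family_def jointly_gaussian_def] sub J(2) by blast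
    have "(\<lambda>\<omega>. \<Sum>S\<in>Aset ` J. a' S * M S \<omega>) = (\<lambda>\<omega>. \<Sum>j\<in>J. a j * W j \<omega>)"
    proof (rule ext)
      fix \<omega>
      have "(\<Sum>S\<in>Aset ` J. a' S * M S \<omega>) = (\<Sum>j\<in>J. a' (Aset j) * M (Aset j) \<omega>)"
        by (rule sum.reindex_cong[OF Aset_inj refl]) simp
      also have "\<dots> = (\<Sum>j\<in>J. a j * W j \<omega>)"
        by (rule sum.cong) (use J in \<open>auto simp: a'_def the_inv_into_f_f[OF Aset_inj] Wd\<close>)
      finally show "(\<Sum>S\<in>Aset ` J. a' S * M S \<omega>) = (\<Sum>j\<in>J. a j * W j \<omega>)" .
    qed
    then show "gaussian_rv P (\<lambda>\<omega>. \<Sum>j\<in>J. a j * W j \<omega>)" using g by simp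
  qed
  have m: "integral\<^sup>L P (W t) = 0" if "t \<in> {0..T}" for t
    using C AI[OF that] Wd[OF that] unfolding centered_gaussian_family_def by simp
  have c: "integral\<^sup>L P (\<lambda>\<omega>. W s \<omega> * W t \<omega>) = measure ?\<nu> (Aset s \<inter> Aset t)" if "s \<in> {0..T}" "t \<in> {0..T}" for s t
    using C AI[OF that(1)] AI[OF that(2)] Wd[OF that(1)] Wd[OF that(2)] unfolding centered_gaussian_family_def by simp
  show ?thesis unfolding centered_gaussian_family_def using JG m c by blast
qed

definition gg :: "real \<Rightarrow> real \<Rightarrow> real \<Rightarrow> real \<Rightarrow> real" where
  "gg \<beta> T t = (\<lambda>x. sqrt (2 powr \<beta> / \<beta>) * sqrt (x powr (-\<beta>) + (T - x) powr (-\<beta>)) * indicator {0..t} x)"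

lemma gg_meas: "gg \<beta> T t \<in> borel_measurable borel"
  unfolding gg_def by measurable

lemma Y_int:
  assumes b: "0 < \<beta>" "\<beta> < 1" and st: "0 \<le> s" "s \<le> T" "0 \<le> t" "t \<le> T"
  shows "integral\<^sup>L (LT T) (\<lambda>x. gg \<beta> T s x * gg \<beta> T t x) =
    (2 powr \<beta> / \<beta>) * ((min s t powr (1-\<beta>) + T powr (1-\<beta>) - (T - min s t) powr (1-\<beta>)) / (1-\<beta>))"
proof -
  let ?m = "min s t"
  let ?h = "\<lambda>x. x powr (-\<beta>) + (T - x) powr (-\<beta>)"
  have "integral\<^sup>L (LT T) (\<lambda>x. gg \<beta> T s x * gg \<beta> T t x) =
      (integral\<^sup>L lborel (\<lambda>x. indicator {0..T} x *\<^sub>R (gg \<beta> T s x * gg \<beta> T t x)) :: real)"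
    unfolding LT_def by (subst integral_restrict_space) simp_all
  also have "\<dots> = integral\<^sup>L lborel (\<lambda>x. (2 powr \<beta> / \<beta>) * (indicator {0..?m} x * ?h x))"
  proof (rule Bochner_Integration.integral_cong[OF refl])
    fix x :: real
    have c0: "0 \<le> 2 powr \<beta> / \<beta>" using b by simp
    show "indicator {0..T} x *\<^sub>R (gg \<beta> T s x * gg \<beta> T t x) = (2 powr \<beta> / \<beta>) * (indicator {0..?m} x * ?h x)"
    proof (cases "0 \<le> x \<and> x \<le> ?m")
      case True
      have h0: "0 \<le> ?h x" by simp
      have e1: "sqrt (2 powr \<beta> / \<beta>) * sqrt (?h x) = sqrt ((2 powr \<beta> / \<beta>) * ?h x)"
        by (rule real_sqrt_mult[symmetric])
      have e2: "sqrt ((2 powr \<beta> / \<beta>) * ?h x) * sqrt ((2 powr \<beta> / \<beta>) * ?h x) = (2 powr \<beta> / \<beta>) * ?h x"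
        using c0 h0 by (simp only: real_sqrt_mult_self abs_of_nonneg mult_nonneg_nonneg)
      have "sqrt (2 powr \<beta> / \<beta>) * sqrt (?h x) * (sqrt (2 powr \<beta> / \<beta>) * sqrt (?h x)) =
          (2 powr \<beta> / \<beta>) * ?h x" unfolding e1 e2 ..
      then show ?thesis using True st unfolding gg_def by (simp add: indicator_def)
    next
      case False
      then show ?thesis unfolding gg_def by (auto simp: indicator_def)
    qed
  qed
  also have "\<dots> = (2 powr \<beta> / \<beta>) * integral\<^sup>L lborel (\<lambda>x. indicator {0..?m} x * ?h x)"
    by simp
  also have "\<dots> = (2 powr \<beta> / \<beta>) * ((?m powr (1-\<beta>) + T powr (1-\<beta>) - (T - ?m) powr (1-\<beta>)) / (1-\<beta>))"
    using int_Y[OF b, of ?m T] st by simp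
  finally show ?thesis .
qed

theorem proposition2:
  fixes P :: "'a measure" and T \<beta> :: real
    and M :: "(real \<times> real) set \<Rightarrow> 'a \<Rightarrow> real"
    and W Y B :: "real \<Rightarrow> 'a \<Rightarrow> real"
  assumes "prob_space P"
    and "T > 0" and "0 < \<beta>" and "\<beta> < 1"
    and "gaussian_white_noise P (control_measure \<beta> T) M"
    and "\<And>t. t \<in> {0..T} \<Longrightarrow> W t = M {(x, u). \<bar>t - x\<bar> \<le> u}"
    and "brownian_motion_on P T B"
    and "prob_space.indep_var P
           (Pi\<^sub>M {0..T} (\<lambda>_. borel)) (\<lambda>\<omega>. \<lambda>t\<in>{0..T}. W t \<omega>)
           (Pi\<^sub>M {0..T} (\<lambda>_. borel)) (\<lambda>\<omega>. \<lambda>t\<in>{0..T}. B t \<omega>)"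
    and "\<And>t. t \<in> {0..T} \<Longrightarrow> wiener_integral P T B
           (\<lambda>x. sqrt (2 powr \<beta> / \<beta>) * sqrt (x powr (-\<beta>) + (T - x) powr (-\<beta>))
                 * indicator {0..t} x)
           (Y t)"
  shows "\<exists>c > 0. fbm_on P ((1 - \<beta>) / 2) T (\<lambda>t \<omega>. (W t \<omega> + Y t \<omega>) / c)"
proof -
  note P = assms(1) and T0 = assms(2) and b = assms(3) assms(4) and WN = assms(5)
    and Wd0 = assms(6) and BM = assms(7) and IND = assms(8) and WI0 = assms(9)
  interpret prob_space P by (rule P)
  interpret bm: bm_setting P T B by (rule bm_setting.intro[OF P BM])
  define K where "K = 2 powr \<beta> / (\<beta> * (1 - \<beta>))"
  define c where "c = sqrt (2 * K)"
  have Kpos: "K > 0" unfolding K_def using b by simp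
  have cpos: "c > 0" unfolding c_def using Kpos by simp
  have cc: "c * c = 2 * K" unfolding c_def using Kpos by simp
  have Wd: "\<And>t. t \<in> {0..T} \<Longrightarrow> W t = M (Aset t)" using Wd0 by (simp add: Aset_def)
  have WI: "\<And>t. t \<in> {0..T} \<Longrightarrow> wiener_integral P T B (gg \<beta> T t) (Y t)"
    using WI0 by (simp add: gg_def)
  have CW: "centered_gaussian_family P {0..T} W (\<lambda>s t. measure (control_measure \<beta> T) (Aset s \<inter> Aset t))"
    by (rule white_noise_family[OF P b T0 WN Wd])
  have JGW: "jointly_gaussian P {0..T} W" using CW by (simp add: centered_gaussian_family_def)
  have EW: "\<And>t. t \<in> {0..T} \<Longrightarrow> integral\<^sup>L P (W t) = 0" using CW by (simp add: centered_gaussian_family_def)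
  have covW: "\<And>s t. s \<in> {0..T} \<Longrightarrow> t \<in> {0..T} \<Longrightarrow>
      integral\<^sup>L P (\<lambda>\<omega>. W s \<omega> * W t \<omega>) = measure (control_measure \<beta> T) (Aset s \<inter> Aset t)"
    using CW by (simp add: centered_gaussian_family_def)
  have sqW: "\<And>t. t \<in> {0..T} \<Longrightarrow> sqi P (W t)" by (rule LC_sqi[OF P JGW LC_B])
  have Ylim: "\<And>t. t \<in> {0..T} \<Longrightarrow> \<exists>l. (\<forall>n. vl T (l n)) \<and> L2conv P (\<lambda>n. step_int B (l n)) (Y t)"
    using bm.wiener_L2[OF WI gg_meas] by blast
  have sqY: "\<And>t. t \<in> {0..T} \<Longrightarrow> sqi P (Y t)" using Ylim L2conv_sqi by blast
  have EY: "\<And>t. t \<in> {0..T} \<Longrightarrow> integral\<^sup>L P (Y t) = 0" by (rule bm.wiener_mean[OF WI gg_meas])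
  have indep: "indep_var borel X borel Z" if X: "X \<in> LC T W" and Z: "Z \<in> LC T B" for X Z
  proof -
    obtain f where f: "f \<in> borel_measurable (Pi\<^sub>M {0..T} (\<lambda>_. borel))" "\<forall>\<omega>. X \<omega> = f (\<lambda>t\<in>{0..T}. W t \<omega>)"
      using LC_fun[OF X] by blast
    obtain g where g: "g \<in> borel_measurable (Pi\<^sub>M {0..T} (\<lambda>_. borel))" "\<forall>\<omega>. Z \<omega> = g (\<lambda>t\<in>{0..T}. B t \<omega>)"
      using LC_fun[OF Z] by blast
    have "indep_var borel (f \<circ> (\<lambda>\<omega>. \<lambda>t\<in>{0..T}. W t \<omega>)) borel (g \<circ> (\<lambda>\<omega>. \<lambda>t\<in>{0..T}. B t \<omega>))"
      by (rule indep_var_compose[OF IND f(1) g(1)])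
    moreover have "X = f \<circ> (\<lambda>\<omega>. \<lambda>t\<in>{0..T}. W t \<omega>)" "Z = g \<circ> (\<lambda>\<omega>. \<lambda>t\<in>{0..T}. B t \<omega>)"
      using f(2) g(2) by (auto simp: fun_eq_iff)
    ultimately show ?thesis by simp
  qed
  have cross: "integral\<^sup>L P (\<lambda>\<omega>. W s \<omega> * Y t \<omega>) = 0" if s: "s \<in> {0..T}" and t: "t \<in> {0..T}" for s t
  proof -
    obtain l where v: "\<forall>n. vl T (l n)" and L: "L2conv P (\<lambda>n. step_int B (l n)) (Y t)"
      using Ylim[OF t] by blast
    have lim: "(\<lambda>n. integral\<^sup>L P (\<lambda>\<omega>. W s \<omega> * step_int B (l n) \<omega>)) \<longlonglongrightarrow> integral\<^sup>L P (\<lambda>\<omega>. W s \<omega> * Y t \<omega>)"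
      by (rule L2conv_prod[OF L2conv_const[OF sqW[OF s]] L])
    have z: "integral\<^sup>L P (\<lambda>\<omega>. W s \<omega> * step_int B (l n) \<omega>) = 0" for n
    proof -
      have LS: "step_int B (l n) \<in> LC T B" using v by (simp add: LC_step)
      have "integral\<^sup>L P (\<lambda>\<omega>. W s \<omega> * step_int B (l n) \<omega>) = integral\<^sup>L P (W s) * integral\<^sup>L P (step_int B (l n))"
        by (rule indep_var_lebesgue_integral[OF indep[OF LC_B[OF s] LS]])
           (simp_all add: sqi_integrable[OF P sqW[OF s]] sqi_integrable[OF P bm.sqiLC[OF LS]])
      then show ?thesis using EW[OF s] by simp
    qed
    show ?thesis using lim z LIMSEQ_unique[of "\<lambda>n. 0" 0] by simp
  qed
  have covY: "integral\<^sup>L P (\<lambda>\<omega>. Y s \<omega> * Y t \<omega>) =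
      (2 powr \<beta> / \<beta>) * ((min s t powr (1-\<beta>) + T powr (1-\<beta>) - (T - min s t) powr (1-\<beta>)) / (1-\<beta>))"
    if s: "s \<in> {0..T}" and t: "t \<in> {0..T}" for s t
    using bm.wiener_props[OF WI[OF s] gg_meas WI[OF t] gg_meas] Y_int[OF b, of s T t] s t by simp
  have covZ: "integral\<^sup>L P (\<lambda>\<omega>. (W s \<omega> + Y s \<omega>) * (W t \<omega> + Y t \<omega>)) =
      K * (s powr (1-\<beta>) + t powr (1-\<beta>) - \<bar>t - s\<bar> powr (1-\<beta>))"
    if s: "s \<in> {0..T}" and t: "t \<in> {0..T}" for s t
  proof -
    have "integral\<^sup>L P (\<lambda>\<omega>. (W s \<omega> + Y s \<omega>) * (W t \<omega> + Y t \<omega>)) =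
      integral\<^sup>L P (\<lambda>\<omega>. W s \<omega> * W t \<omega> + W s \<omega> * Y t \<omega> + W t \<omega> * Y s \<omega> + Y s \<omega> * Y t \<omega>)"
      by (rule Bochner_Integration.integral_cong) (auto simp: algebra_simps)
    also have "\<dots> = integral\<^sup>L P (\<lambda>\<omega>. W s \<omega> * W t \<omega>) + integral\<^sup>L P (\<lambda>\<omega>. W s \<omega> * Y t \<omega>)
        + integral\<^sup>L P (\<lambda>\<omega>. W t \<omega> * Y s \<omega>) + integral\<^sup>L P (\<lambda>\<omega>. Y s \<omega> * Y t \<omega>)"
      using sqi_mult_integrable[OF sqW[OF s] sqW[OF t]] sqi_mult_integrable[OF sqW[OF s] sqY[OF t]]
        sqi_mult_integrable[OF sqW[OF t] sqY[OF s]] sqi_mult_integrable[OF sqY[OF s] sqY[OF t]]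
      by simp
    also have "\<dots> = measure (control_measure \<beta> T) (Aset s \<inter> Aset t) +
        (2 powr \<beta> / \<beta>) * ((min s t powr (1-\<beta>) + T powr (1-\<beta>) - (T - min s t) powr (1-\<beta>)) / (1-\<beta>))"
      using covW[OF s t] cross[OF s t] cross[OF t s] covY[OF s t] by simp
    also have "\<dots> = K * (s powr (1-\<beta>) + t powr (1-\<beta>) - \<bar>t - s\<bar> powr (1-\<beta>))"
    proof (cases "s \<le> t")
      case True
      have "measure (control_measure \<beta> T) (Aset s \<inter> Aset t) = Vf \<beta> T s t"
        using nu_measure(2)[OF b, of s t] s t True by simp
      moreover have "(2 powr \<beta> / \<beta>) * ((min s t powr (1-\<beta>) + T powr (1-\<beta>) - (T - min s t) powr (1-\<beta>)) / (1-\<beta>))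
          = K * (s powr (1-\<beta>) + T powr (1-\<beta>) - (T - s) powr (1-\<beta>))"
        using True unfolding K_def by simp
      moreover have "\<bar>t - s\<bar> = t - s" using True by simp
      ultimately show ?thesis unfolding Vf_def K_def[symmetric] by (simp add: algebra_simps)
    next
      case False
      have "measure (control_measure \<beta> T) (Aset s \<inter> Aset t) = Vf \<beta> T t s"
        using nu_measure(2)[OF b, of t s] s t False by (simp add: Int_commute)
      moreover have "(2 powr \<beta> / \<beta>) * ((min s t powr (1-\<beta>) + T powr (1-\<beta>) - (T - min s t) powr (1-\<beta>)) / (1-\<beta>))
          = K * (t powr (1-\<beta>) + T powr (1-\<beta>) - (T - t) powr (1-\<beta>))"
        using False unfolding K_def by simp
      moreover have "\<bar>t - s\<bar> = s - t" using False by simp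
      ultimately show ?thesis unfolding Vf_def K_def[symmetric] by (simp add: algebra_simps)
    qed
    finally show ?thesis .
  qed
  have JG: "jointly_gaussian P {0..T} (\<lambda>t \<omega>. (W t \<omega> + Y t \<omega>) / c)"
    unfolding jointly_gaussian_def
  proof (intro allI impI)
    fix J :: "real set" and a :: "real \<Rightarrow> real"
    assume J: "J \<subseteq> {0..T}" "finite J"
    have "\<forall>j\<in>J. \<exists>l. (\<forall>n. vl T (l n)) \<and> L2conv P (\<lambda>n. step_int B (l n)) (Y j)"
      using Ylim J by blast
    then obtain LL where LL: "\<And>j. j \<in> J \<Longrightarrow> (\<forall>n. vl T (LL j n)) \<and> L2conv P (\<lambda>n. step_int B (LL j n)) (Y j)"
      by metis
    define U where "U \<omega> = (\<Sum>j\<in>J. (a j / c) * W j \<omega>)" for \<omega>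
    define V where "V \<omega> = (\<Sum>j\<in>J. (a j / c) * Y j \<omega>)" for \<omega>
    define Vn where "Vn n \<omega> = (\<Sum>j\<in>J. (a j / c) * step_int B (LL j n) \<omega>)" for n \<omega>
    have UL: "U \<in> LC T W" unfolding U_def
      using J by (intro LC_sum LC_cmult LC_B) auto
    have VL: "Vn n \<in> LC T B" for n unfolding Vn_def
      using J LL by (intro LC_sum LC_cmult LC_step) auto
    have gU: "gaussian_rv P U" by (rule LC_gauss[OF JGW UL])
    have gV: "gaussian_rv P (Vn n)" for n by (rule LC_gauss[OF bm.JG VL])
    have gUV: "gaussian_rv P (\<lambda>\<omega>. U \<omega> + Vn n \<omega>)" for n
      by (rule gaussian_add_indep[OF P gU gV indep[OF UL VL]])
    have LV: "L2conv P Vn V"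
    proof -
      have "L2conv P (\<lambda>n \<omega>. \<Sum>j\<in>J. (\<lambda>n \<omega>. (a j / c) * step_int B (LL j n) \<omega>) n \<omega>)
          (\<lambda>\<omega>. \<Sum>j\<in>J. (\<lambda>\<omega>. (a j / c) * Y j \<omega>) \<omega>)"
        by (rule L2conv_sum, rule L2conv_cmult) (use LL in blast)
      then show ?thesis unfolding Vn_def[abs_def] V_def[abs_def] by simp
    qed
    have sU: "sqi P U" by (rule LC_sqi[OF P JGW UL])
    have LUV: "L2conv P (\<lambda>n \<omega>. U \<omega> + Vn n \<omega>) (\<lambda>\<omega>. U \<omega> + V \<omega>)"
      by (rule L2conv_add[OF L2conv_const[OF sU] LV])
    have g: "gaussian_rv P (\<lambda>\<omega>. U \<omega> + V \<omega>)" by (rule gaussian_L2lim[OF P gUV LUV])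
    have "(\<lambda>\<omega>. U \<omega> + V \<omega>) = (\<lambda>\<omega>. \<Sum>j\<in>J. a j * ((W j \<omega> + Y j \<omega>) / c))"
    proof (rule ext)
      fix \<omega>
      have "U \<omega> + V \<omega> = (\<Sum>j\<in>J. (a j / c) * W j \<omega> + (a j / c) * Y j \<omega>)"
        unfolding U_def V_def by (simp add: sum.distrib)
      also have "\<dots> = (\<Sum>j\<in>J. a j * ((W j \<omega> + Y j \<omega>) / c))"
        by (rule sum.cong) (simp_all add: add_divide_distrib distrib_left)
      finally show "U \<omega> + V \<omega> = (\<Sum>j\<in>J. a j * ((W j \<omega> + Y j \<omega>) / c))" .
    qed
    then show "gaussian_rv P (\<lambda>\<omega>. \<Sum>j\<in>J. a j * ((W j \<omega> + Y j \<omega>) / c))" using g by simp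
  qed
  have mean: "integral\<^sup>L P (\<lambda>\<omega>. (W t \<omega> + Y t \<omega>) / c) = 0" if t: "t \<in> {0..T}" for t
  proof -
    have "integral\<^sup>L P (\<lambda>\<omega>. W t \<omega> + Y t \<omega>) = integral\<^sup>L P (W t) + integral\<^sup>L P (Y t)"
      using sqi_integrable[OF P sqW[OF t]] sqi_integrable[OF P sqY[OF t]] by simp
    then show ?thesis using EW[OF t] EY[OF t] by simp
  qed
  have cov: "integral\<^sup>L P (\<lambda>\<omega>. (W s \<omega> + Y s \<omega>) / c * ((W t \<omega> + Y t \<omega>) / c)) =
      (\<bar>s\<bar> powr (2 * ((1 - \<beta>) / 2)) + \<bar>t\<bar> powr (2 * ((1 - \<beta>) / 2)) - \<bar>t - s\<bar> powr (2 * ((1 - \<beta>) / 2))) / 2"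
    if s: "s \<in> {0..T}" and t: "t \<in> {0..T}" for s t
  proof -
    have "integral\<^sup>L P (\<lambda>\<omega>. (W s \<omega> + Y s \<omega>) / c * ((W t \<omega> + Y t \<omega>) / c)) =
        integral\<^sup>L P (\<lambda>\<omega>. (W s \<omega> + Y s \<omega>) * (W t \<omega> + Y t \<omega>) / (c * c))"
      by (rule Bochner_Integration.integral_cong) simp_all
    also have "\<dots> = integral\<^sup>L P (\<lambda>\<omega>. (W s \<omega> + Y s \<omega>) * (W t \<omega> + Y t \<omega>)) / (c * c)"
      by simp
    also have "\<dots> = K * (s powr (1-\<beta>) + t powr (1-\<beta>) - \<bar>t - s\<bar> powr (1-\<beta>)) / (2 * K)"
      using covZ[OF s t] cc by simp
    also have "\<dots> = (s powr (1-\<beta>) + t powr (1-\<beta>) - \<bar>t - s\<bar> powr (1-\<beta>)) / 2"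
      using Kpos by simp
    also have "\<dots> = (\<bar>s\<bar> powr (2 * ((1 - \<beta>) / 2)) + \<bar>t\<bar> powr (2 * ((1 - \<beta>) / 2)) - \<bar>t - s\<bar> powr (2 * ((1 - \<beta>) / 2))) / 2"
    proof -
      have e: "2 * ((1 - \<beta>) / 2) = 1 - \<beta>" by simp
      show ?thesis unfolding e using s t by simp
    qed
    finally show ?thesis .
  qed
  have "fbm_on P ((1 - \<beta>) / 2) T (\<lambda>t \<omega>. (W t \<omega> + Y t \<omega>) / c)"
    unfolding fbm_on_def centered_gaussian_family_def using JG mean cov by blast
  then show ?thesis using cpos by blast
qed

end
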